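(* Let $K$ be a real quadratic field with $\mathcal O_K$ principal and $\Gamma=\mathbf{SL}_2(\mathcal O_K)$. If $F$ is a symmetric Hilbert modular form for $\Gamma$ with $TF\neq0$, then $F,\Lambda F,\Pi_1F,\Pi_2F$ are algebraically independent over $\mathbb C$, and consequently $F,\Lambda F,\Pi F$ are algebraically independent over $\mathbb C$.
   Context: Hilbert modular forms of weight $(f_1,f_2)$: holomorphic $F$ on $\mathcal H^2$ with $F(\gamma\underline z)=(cz_1+d)^{f_1}(c'z_2+d')^{f_2}F(\underline z)$ for $\gamma\in\Gamma$; symmetric: $F(z_1,z_2)=F(z_2,z_1)$. $[F,G]_{1_i}=(2\pi i)^{-1}(g_iG\partial F/\partial z_i-f_iF\partial G/\partial z_i)$; $\Pi_iF=(2\pi i)^{-2}(f_iF\partial^2F/\partial z_i^2-(f_i+1)(\partial F/\partial z_i)^2)$, $\Pi F=\Pi_1F\Pi_2F$ (weight $4\underline f+(4,4)$), $\Lambda F=(2\pi i)^{-2}(F\partial^2F/\partial z_1\partial z_2-\partial_1F\partial_2F)$ (weight $2\underline f+(2,2)$), and $TF=[F,\Lambda F]_{1_1}[F,\Pi F]_{1_2}-[F,\Lambda F]_{1_2}[F,\Pi F]_{1_1}$. *)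

theory Defs
  imports "HOL-Complex_Analysis.Complex_Analysis" "HOL-Computational_Algebra.Squarefree"
begin

text \<open>An element of O_K is represented by its
integer coordinates (a,b) with respect to the Z-basis 1, omega, where omega = sqrt d
(d not 1 mod 4) or (1 + sqrt d)/2 (d = 1 mod 4).  emb1 and emb2 are the two real embeddings.\<close>

definition omega1 :: "int \<Rightarrow> real" where
  "omega1 d = (if d mod 4 = 1 then (1 + sqrt (real_of_int d)) / 2 else sqrt (real_of_int d))"

definition omega2 :: "int \<Rightarrow> real" where
  "omega2 d = (if d mod 4 = 1 then (1 - sqrt (real_of_int d)) / 2 else - sqrt (real_of_int d))"

definition emb1 :: "int \<Rightarrow> int \<times> int \<Rightarrow> real" where
  "emb1 d x = real_of_int (fst x) + real_of_int (snd x) * omega1 d"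

definition emb2 :: "int \<Rightarrow> int \<times> int \<Rightarrow> real" where
  "emb2 d x = real_of_int (fst x) + real_of_int (snd x) * omega2 d"

definition OK :: "int \<Rightarrow> real set" where
  "OK d = range (emb1 d)"

definition OK_ideal :: "int \<Rightarrow> real set \<Rightarrow> bool" where
  "OK_ideal d I \<longleftrightarrow> I \<subseteq> OK d \<and> 0 \<in> I \<and> (\<forall>x\<in>I. \<forall>y\<in>I. x + y \<in> I \<and> - x \<in> I)
      \<and> (\<forall>r\<in>OK d. \<forall>x\<in>I. r * x \<in> I)"

definition OK_principal :: "int \<Rightarrow> bool" where
  "OK_principal d \<longleftrightarrow> (\<forall>I. OK_ideal d I \<longrightarrow> (\<exists>x\<in>OK d. I = (\<lambda>y. x * y) ` OK d))"

type_synonym okmat = "(int \<times> int) \<times> (int \<times> int) \<times> (int \<times> int) \<times> (int \<times> int)"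

definition SL2_OK :: "int \<Rightarrow> okmat set" where
  "SL2_OK d = {(a, b, c, e). emb1 d a * emb1 d e - emb1 d b * emb1 d c = 1}"

definition upper_half :: "complex set" where
  "upper_half = {z. Im z > 0}"

definition mob :: "real \<Rightarrow> real \<Rightarrow> real \<Rightarrow> real \<Rightarrow> complex \<Rightarrow> complex" where
  "mob a b c e z = (of_real a * z + of_real b) / (of_real c * z + of_real e)"

text \<open>Hilbert modular form of weight (f1,f2) for SL_2(O_K): continuous on H^2, holomorphic in
each variable separately (equivalently holomorphic, by Osgood/Hartogs), with the transformation law.\<close>
definition hilbert_modular_form :: "int \<Rightarrow> int \<Rightarrow> int \<Rightarrow> (complex \<Rightarrow> complex \<Rightarrow> complex) \<Rightarrow> bool" where
  "hilbert_modular_form d f1 f2 F \<longleftrightarrow>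
     continuous_on (upper_half \<times> upper_half) (\<lambda>(z1, z2). F z1 z2) \<and>
     (\<forall>z2\<in>upper_half. (\<lambda>z1. F z1 z2) holomorphic_on upper_half) \<and>
     (\<forall>z1\<in>upper_half. (\<lambda>z2. F z1 z2) holomorphic_on upper_half) \<and>
     (\<forall>(a, b, c, e)\<in>SL2_OK d. \<forall>z1\<in>upper_half. \<forall>z2\<in>upper_half.
        F (mob (emb1 d a) (emb1 d b) (emb1 d c) (emb1 d e) z1)
          (mob (emb2 d a) (emb2 d b) (emb2 d c) (emb2 d e) z2)
        = (of_real (emb1 d c) * z1 + of_real (emb1 d e)) powi f1
          * (of_real (emb2 d c) * z2 + of_real (emb2 d e)) powi f2 * F z1 z2)"

definition symmetric_form :: "(complex \<Rightarrow> complex \<Rightarrow> complex) \<Rightarrow> bool" where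
  "symmetric_form F \<longleftrightarrow> (\<forall>z1\<in>upper_half. \<forall>z2\<in>upper_half. F z1 z2 = F z2 z1)"

definition pd1 :: "(complex \<Rightarrow> complex \<Rightarrow> complex) \<Rightarrow> complex \<Rightarrow> complex \<Rightarrow> complex" where
  "pd1 F = (\<lambda>z1 z2. deriv (\<lambda>w. F w z2) z1)"

definition pd2 :: "(complex \<Rightarrow> complex \<Rightarrow> complex) \<Rightarrow> complex \<Rightarrow> complex \<Rightarrow> complex" where
  "pd2 F = (\<lambda>z1 z2. deriv (\<lambda>w. F z1 w) z2)"

definition pd :: "nat \<Rightarrow> (complex \<Rightarrow> complex \<Rightarrow> complex) \<Rightarrow> complex \<Rightarrow> complex \<Rightarrow> complex" where
  "pd i F = (if i = 1 then pd1 F else pd2 F)"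

text \<open>[F,G]_{1_i} for F of weight with i-th component fi and G with i-th component gi.\<close>
definition bracket1 :: "nat \<Rightarrow> int \<Rightarrow> (complex \<Rightarrow> complex \<Rightarrow> complex) \<Rightarrow> int \<Rightarrow> (complex \<Rightarrow> complex \<Rightarrow> complex)
    \<Rightarrow> complex \<Rightarrow> complex \<Rightarrow> complex" where
  "bracket1 i fi F gi G = (\<lambda>z1 z2. inverse (2 * of_real pi * \<i>) *
      (of_int gi * G z1 z2 * pd i F z1 z2 - of_int fi * F z1 z2 * pd i G z1 z2))"

definition PiOp :: "nat \<Rightarrow> int \<Rightarrow> (complex \<Rightarrow> complex \<Rightarrow> complex) \<Rightarrow> complex \<Rightarrow> complex \<Rightarrow> complex" where
  "PiOp i fi F = (\<lambda>z1 z2. inverse ((2 * of_real pi * \<i>)\<^sup>2) *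
      (of_int fi * F z1 z2 * pd i (pd i F) z1 z2 - of_int (fi + 1) * (pd i F z1 z2)\<^sup>2))"

definition PiF :: "int \<Rightarrow> int \<Rightarrow> (complex \<Rightarrow> complex \<Rightarrow> complex) \<Rightarrow> complex \<Rightarrow> complex \<Rightarrow> complex" where
  "PiF f1 f2 F = (\<lambda>z1 z2. PiOp 1 f1 F z1 z2 * PiOp 2 f2 F z1 z2)"

definition LambdaF :: "(complex \<Rightarrow> complex \<Rightarrow> complex) \<Rightarrow> complex \<Rightarrow> complex \<Rightarrow> complex" where
  "LambdaF F = (\<lambda>z1 z2. inverse ((2 * of_real pi * \<i>)\<^sup>2) *
      (F z1 z2 * pd1 (pd2 F) z1 z2 - pd1 F z1 z2 * pd2 F z1 z2))"

text \<open>T F, with weights: F has (f1,f2), Lambda F has 2f+(2,2), Pi F has 4f+(4,4).\<close>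
definition TF :: "int \<Rightarrow> int \<Rightarrow> (complex \<Rightarrow> complex \<Rightarrow> complex) \<Rightarrow> complex \<Rightarrow> complex \<Rightarrow> complex" where
  "TF f1 f2 F = (\<lambda>z1 z2.
      bracket1 1 f1 F (2*f1+2) (LambdaF F) z1 z2 * bracket1 2 f2 F (4*f2+4) (PiF f1 f2 F) z1 z2
    - bracket1 2 f2 F (2*f2+2) (LambdaF F) z1 z2 * bracket1 1 f1 F (4*f1+4) (PiF f1 f2 F) z1 z2)"

text \<open>A polynomial in n variables over C is given by a finitely supported coefficient function
on exponent vectors (lists of length n).\<close>
definition poly_eval :: "(nat list \<Rightarrow> complex) \<Rightarrow> (complex \<Rightarrow> complex \<Rightarrow> complex) list \<Rightarrow> complex \<Rightarrow> complex \<Rightarrow> complex" where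
  "poly_eval c gs z1 z2 = (\<Sum>\<alpha>\<in>{\<alpha>. c \<alpha> \<noteq> 0}. c \<alpha> * (\<Prod>i<length gs. (gs ! i) z1 z2 ^ (\<alpha> ! i)))"

definition alg_indep :: "(complex \<Rightarrow> complex \<Rightarrow> complex) list \<Rightarrow> bool" where
  "alg_indep gs \<longleftrightarrow> (\<forall>c :: nat list \<Rightarrow> complex.
      finite {\<alpha>. c \<alpha> \<noteq> 0} \<longrightarrow> (\<forall>\<alpha>. c \<alpha> \<noteq> 0 \<longrightarrow> length \<alpha> = length gs) \<longrightarrow>
      (\<exists>\<alpha>. c \<alpha> \<noteq> 0) \<longrightarrow>
      (\<exists>z1\<in>upper_half. \<exists>z2\<in>upper_half. poly_eval c gs z1 z2 \<noteq> 0))"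

end

theory Submission
  imports Defs "HOL-Computational_Algebra.Polynomial"
begin

lemma open_H: "open upper_half"
  unfolding upper_half_def by (rule open_halfspace_Im_gt)

lemma convex_H: "convex upper_half"
  unfolding upper_half_def by (rule convex_halfspace_Im_gt)

definition sh :: "(complex \<Rightarrow> complex \<Rightarrow> complex) \<Rightarrow> bool" where
  "sh G \<longleftrightarrow> continuous_on (upper_half \<times> upper_half) (\<lambda>(a,b). G a b) \<and>
     (\<forall>z2\<in>upper_half. (\<lambda>z1. G z1 z2) holomorphic_on upper_half) \<and>
     (\<forall>z1\<in>upper_half. (\<lambda>z2. G z1 z2) holomorphic_on upper_half)"

definition swp :: "(complex \<Rightarrow> complex \<Rightarrow> complex) \<Rightarrow> complex \<Rightarrow> complex \<Rightarrow> complex" where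
  "swp G = (\<lambda>a b. G b a)"

lemma sh_swp: assumes "sh G" shows "sh (swp G)"
proof -
  have c: "continuous_on (upper_half \<times> upper_half) (\<lambda>(a,b). G a b)" using assms sh_def by blast
  have "continuous_on (upper_half \<times> upper_half) (\<lambda>x. (\<lambda>(a,b). G a b) ((\<lambda>(a,b). (b,a)) x))"
    by (rule continuous_on_compose2[OF c]) (auto intro!: continuous_intros simp: case_prod_unfold)
  then have "continuous_on (upper_half \<times> upper_half) (\<lambda>(a,b). swp G a b)"
    by (simp add: swp_def o_def case_prod_unfold)
  then show ?thesis using assms unfolding sh_def swp_def by auto
qed

lemma pd2_swp: "pd2 G = swp (pd1 (swp G))"
  by (simp add: pd1_def pd2_def swp_def)

definition cpth :: "complex \<Rightarrow> real \<Rightarrow> real \<Rightarrow> complex" where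
  "cpth p r t = p + of_real r * exp (2 * of_real pi * \<i> * of_real t)"
definition cpthd :: "real \<Rightarrow> real \<Rightarrow> complex" where
  "cpthd r t = 2 * of_real pi * \<i> * of_real r * exp (2 * of_real pi * \<i> * of_real t)"

lemma cpth_in: "r > 0 \<Longrightarrow> cpth p r t \<in> sphere p r"
  by (simp add: cpth_def dist_norm norm_mult)

lemma pd1_integral:
  assumes "sh G" "r > 0" "cball p r \<subseteq> upper_half" "z1 \<in> ball p r" "z2 \<in> upper_half"
  shows "pd1 G z1 z2 = integral (cbox 0 1) (\<lambda>t. G (cpth p r t) z2 / (cpth p r t - z1)^2 * cpthd r t) / (2 * of_real pi * \<i>)"
proof -
  have hol: "(\<lambda>w. G w z2) holomorphic_on upper_half" using assms sh_def by blast
  have "continuous_on (cball p r) (\<lambda>w. G w z2)"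
    using hol assms(3) holomorphic_on_imp_continuous_on holomorphic_on_subset by blast
  moreover have "(\<lambda>w. G w z2) holomorphic_on ball p r"
    using hol assms(3) ball_subset_cball holomorphic_on_subset by blast
  ultimately have "((\<lambda>u. G u z2 / (u - z1) ^ (Suc 1)) has_contour_integral ((2 * pi * \<i>) / (fact 1) * (deriv ^^ 1) (\<lambda>w. G w z2) z1)) (circlepath p r)"
    by (rule Cauchy_has_contour_integral_higher_derivative_circlepath) (rule assms)
  then have "((\<lambda>u. G u z2 / (u - z1) ^ 2) has_contour_integral (2 * pi * \<i> * pd1 G z1 z2)) (circlepath p r)"
    unfolding Suc_1 by (simp add: pd1_def)
  then have "contour_integral (circlepath p r) (\<lambda>u. G u z2 / (u - z1) ^ 2) = 2 * pi * \<i> * pd1 G z1 z2"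
    by (rule contour_integral_unique)
  moreover have "contour_integral (circlepath p r) (\<lambda>u. G u z2 / (u - z1) ^ 2) =
      integral (cbox 0 1) (\<lambda>t. G (cpth p r t) z2 / (cpth p r t - z1)^2 * cpthd r t)"
    unfolding contour_integral_integral vector_derivative_circlepath cbox_interval
    by (simp add: circlepath cpth_def cpthd_def mult_ac)
  ultimately show ?thesis by simp
qed

lemma cont_cpth: "continuous_on S (cpth p r)" unfolding cpth_def by (intro continuous_intros)
lemma cont_cpthd: "continuous_on S (cpthd r)" unfolding cpthd_def by (intro continuous_intros)

lemma cont_pd1: assumes "sh G" shows "continuous_on (upper_half \<times> upper_half) (\<lambda>(a,b). pd1 G a b)"
proof -
  have cG: "continuous_on (upper_half \<times> upper_half) (\<lambda>(a,b). G a b)" using assms sh_def by blast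
  have oHH: "open (upper_half \<times> upper_half)" using open_H by (simp add: open_Times)
  show ?thesis unfolding continuous_on_eq_continuous_at[OF oHH]
  proof
    fix x assume x: "x \<in> upper_half \<times> upper_half"
    obtain p q where pq: "x = (p,q)" by (cases x)
    have p: "p \<in> upper_half" and q: "q \<in> upper_half" using x pq by auto
    obtain r where r: "r > 0" "cball p r \<subseteq> upper_half" using open_contains_cball open_H p by blast
    define U where "U = ball p r \<times> upper_half"
    have oU: "open U" unfolding U_def using open_H by (simp add: open_Times)
    have xU: "x \<in> U" unfolding U_def using pq q r by auto
    have c1: "continuous_on (U \<times> cbox 0 1) (\<lambda>(y, t). G (cpth p r t) (snd y))"
    proof -
      have "continuous_on (U \<times> cbox 0 1) (\<lambda>y. (\<lambda>(a,b). G a b) ((\<lambda>(y,t). (cpth p r t, snd y)) y))"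
      proof (rule continuous_on_compose2[OF cG])
        show "continuous_on (U \<times> cbox 0 1) (\<lambda>(y, t). (cpth p r t, snd y))"
          by (auto simp: case_prod_unfold intro!: continuous_intros continuous_on_compose2[OF cont_cpth])
        show "(\<lambda>(y, t). (cpth p r t, snd y)) ` (U \<times> cbox 0 1) \<subseteq> upper_half \<times> upper_half"
          using cpth_in[OF r(1), of p] r(2) by (auto simp: U_def)
      qed
      then show ?thesis by (simp add: case_prod_unfold)
    qed
    have c2: "continuous_on (U \<times> cbox 0 1) (\<lambda>(y, t). G (cpth p r t) (snd y) / (cpth p r t - fst y)^2 * cpthd r t)"
    proof -
      have ne: "cpth p r t - fst y \<noteq> 0" if "y \<in> U" for y t
      proof
        assume "cpth p r t - fst y = 0"
        then have "cpth p r t = fst y" by simp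
        moreover have "dist p (fst y) < r" using that by (auto simp: U_def)
        ultimately show False using cpth_in[OF r(1), of p t] by simp
      qed
      show ?thesis using c1 ne
        by (auto simp: case_prod_unfold intro!: continuous_intros continuous_on_compose2[OF cont_cpth]
              continuous_on_compose2[OF cont_cpthd])
    qed
    have "continuous_on U (\<lambda>y. integral (cbox 0 1) (\<lambda>t. G (cpth p r t) (snd y) / (cpth p r t - fst y)^2 * cpthd r t) / (2 * of_real pi * \<i>))"
      using integral_continuous_on_param[OF c2] by (intro continuous_intros) auto
    then have "continuous_on U (\<lambda>(a,b). pd1 G a b)"
    proof (rule continuous_on_eq)
      fix y assume "y \<in> U"
      then show "integral (cbox 0 1) (\<lambda>t. G (cpth p r t) (snd y) / (cpth p r t - fst y)^2 * cpthd r t) / (2 * of_real pi * \<i>) = (\<lambda>(a,b). pd1 G a b) y"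
        using pd1_integral[OF assms r(1) r(2)] by (auto simp: U_def case_prod_unfold)
    qed
    then show "isCont (\<lambda>(a,b). pd1 G a b) x"
      using continuous_on_eq_continuous_at[OF oU] xU by blast
  qed
qed

lemma cont_pd2: assumes "sh G" shows "continuous_on (upper_half \<times> upper_half) (\<lambda>(a,b). pd2 G a b)"
proof -
  have "continuous_on (upper_half \<times> upper_half) (\<lambda>(a,b). pd1 (swp G) a b)"
    by (rule cont_pd1[OF sh_swp[OF assms]])
  have "continuous_on (upper_half \<times> upper_half) (\<lambda>x. (\<lambda>(a,b). pd1 (swp G) a b) ((\<lambda>(a,b). (b,a)) x))"
    by (rule continuous_on_compose2[OF \<open>continuous_on _ _\<close>]) (auto intro!: continuous_intros simp: case_prod_unfold)
  then show ?thesis by (simp add: pd2_swp swp_def case_prod_unfold)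
qed

lemma hol2_pd1: assumes "sh G" "z1 \<in> upper_half" shows "(\<lambda>z2. pd1 G z1 z2) holomorphic_on upper_half"
proof -
  obtain r where r: "r > 0" "cball z1 r \<subseteq> upper_half" using open_contains_cball open_H assms(2) by blast
  have z1: "z1 \<in> ball z1 r" using r by simp
  have cG2: "continuous_on (upper_half \<times> upper_half) (\<lambda>(a,b). pd2 G a b)" by (rule cont_pd2[OF assms(1)])
  have inH: "cpth z1 r t \<in> upper_half" for t using cpth_in[OF r(1), of z1 t] r(2) by auto
  have ne: "cpth z1 r t - z1 \<noteq> 0" for t using cpth_in[OF r(1), of z1 t] r(1) by auto
  have hol: "\<And>a. a \<in> upper_half \<Longrightarrow> (\<lambda>w. G a w) holomorphic_on upper_half" using assms(1) sh_def by blast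
  have cG: "continuous_on (upper_half \<times> upper_half) (\<lambda>(a,b). G a b)" using assms sh_def by blast
  have "(\<lambda>x. integral (cbox 0 1) (\<lambda>t. G (cpth z1 r t) x / (cpth z1 r t - z1)^2 * cpthd r t)) holomorphic_on upper_half"
  proof (rule leibniz_rule_holomorphic[where fx="\<lambda>x t. pd2 G (cpth z1 r t) x / (cpth z1 r t - z1)^2 * cpthd r t"])
    fix x t assume x: "x \<in> upper_half" and "t \<in> cbox (0::real) 1"
    have dd: "((\<lambda>w. G (cpth z1 r t) w) has_field_derivative pd2 G (cpth z1 r t) x) (at x within upper_half)"
      unfolding pd2_def using holomorphic_derivI[OF hol[OF inH] open_H x] by simp
    show "((\<lambda>x. G (cpth z1 r t) x / (cpth z1 r t - z1)^2 * cpthd r t) has_field_derivative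
        pd2 G (cpth z1 r t) x / (cpth z1 r t - z1)^2 * cpthd r t) (at x within upper_half)"
      using DERIV_cmult_right[OF dd, of "cpthd r t / (cpth z1 r t - z1)^2"] by simp
  next
    fix x assume x: "x \<in> upper_half"
    have "continuous_on (cbox 0 1) (\<lambda>t. G (cpth z1 r t) x)"
      by (rule continuous_on_compose2[OF cG, where f="\<lambda>t. (cpth z1 r t, x)", simplified])
         (auto intro!: continuous_intros cont_cpth inH x)
    then show "(\<lambda>t. G (cpth z1 r t) x / (cpth z1 r t - z1)^2 * cpthd r t) integrable_on cbox 0 1"
      using ne by (intro integrable_continuous continuous_intros \<open>continuous_on (cbox 0 1) _\<close> cont_cpth cont_cpthd) auto
  next
    have "continuous_on (upper_half \<times> cbox 0 1) (\<lambda>y. (\<lambda>(a,b). pd2 G a b) ((\<lambda>(x,t). (cpth z1 r t, x)) y))"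
    proof (rule continuous_on_compose2[OF cG2])
      show "continuous_on (upper_half \<times> cbox 0 1) (\<lambda>(x, t). (cpth z1 r t, x))"
        by (auto simp: case_prod_unfold intro!: continuous_intros continuous_on_compose2[OF cont_cpth])
      show "(\<lambda>(x, t). (cpth z1 r t, x)) ` (upper_half \<times> cbox 0 1) \<subseteq> upper_half \<times> upper_half"
        using inH by auto
    qed
    then have "continuous_on (upper_half \<times> cbox 0 1) (\<lambda>(x, t). pd2 G (cpth z1 r t) x)"
      by (simp add: case_prod_unfold)
    then show "continuous_on (upper_half \<times> cbox 0 1) (\<lambda>(x, t). pd2 G (cpth z1 r t) x / (cpth z1 r t - z1)^2 * cpthd r t)"
      using ne by (auto simp: case_prod_unfold intro!: continuous_intros continuous_on_compose2[OF cont_cpth]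
              continuous_on_compose2[OF cont_cpthd])
  qed (rule convex_H)
  then have "(\<lambda>x. integral (cbox 0 1) (\<lambda>t. G (cpth z1 r t) x / (cpth z1 r t - z1)^2 * cpthd r t) / (2 * of_real pi * \<i>)) holomorphic_on upper_half"
    by (intro holomorphic_intros) auto
  then show ?thesis
    by (rule holomorphic_transform) (use pd1_integral[OF assms(1) r z1] in auto)
qed

lemma sh_pd1: assumes "sh G" shows "sh (pd1 G)"
proof -
  have "\<forall>z2\<in>upper_half. (\<lambda>z1. pd1 G z1 z2) holomorphic_on upper_half"
  proof
    fix z2 assume "z2 \<in> upper_half"
    then have "(\<lambda>w. G w z2) holomorphic_on upper_half" using assms sh_def by blast
    then have "deriv (\<lambda>w. G w z2) holomorphic_on upper_half" by (rule holomorphic_deriv[OF _ open_H])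
    then show "(\<lambda>z1. pd1 G z1 z2) holomorphic_on upper_half" by (simp add: pd1_def)
  qed
  then show ?thesis using cont_pd1[OF assms] hol2_pd1[OF assms] unfolding sh_def by blast
qed

lemma sh_pd2: assumes "sh G" shows "sh (pd2 G)"
  unfolding pd2_swp by (intro sh_swp sh_pd1 assms)

lemma sh_pd: assumes "sh G" shows "sh (pd i G)"
  unfolding pd_def using sh_pd1[OF assms] sh_pd2[OF assms] by simp

lemma sh_const: "sh (\<lambda>a b. k)"
  unfolding sh_def by (auto intro!: continuous_intros)

lemma sh_add: assumes "sh F" "sh G" shows "sh (\<lambda>a b. F a b + G a b)"
  using assms unfolding sh_def case_prod_unfold by (auto intro!: continuous_intros holomorphic_intros)

lemma sh_diff: assumes "sh F" "sh G" shows "sh (\<lambda>a b. F a b - G a b)"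
  using assms unfolding sh_def case_prod_unfold by (auto intro!: continuous_intros holomorphic_intros)

lemma sh_mult: assumes "sh F" "sh G" shows "sh (\<lambda>a b. F a b * G a b)"
  using assms unfolding sh_def case_prod_unfold by (auto intro!: continuous_intros holomorphic_intros)

lemma sh_power: assumes "sh F" shows "sh (\<lambda>a b. F a b ^ n)"
  using assms unfolding sh_def case_prod_unfold by (auto intro!: continuous_intros holomorphic_intros)

lemma sh_cmult: assumes "sh F" shows "sh (\<lambda>a b. k * F a b)"
  using sh_mult[OF sh_const assms] .

lemma sh_LambdaF: assumes "sh F" shows "sh (LambdaF F)"
  unfolding LambdaF_def by (intro sh_cmult sh_diff sh_mult sh_pd1 sh_pd2 assms)

lemma sh_PiOp: assumes "sh F" shows "sh (PiOp i k F)"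
  unfolding PiOp_def by (intro sh_cmult sh_diff sh_mult sh_pd sh_power sh_const assms)

lemma sh_PiF: assumes "sh F" shows "sh (PiF f1 f2 F)"
  unfolding PiF_def by (intro sh_mult sh_PiOp assms)

lemma sh_bracket1: assumes "sh F" "sh G" shows "sh (bracket1 i fi F gi G)"
  unfolding bracket1_def by (intro sh_cmult sh_diff sh_mult sh_pd sh_const assms)

lemma sh_TF: assumes "sh F" shows "sh (TF f1 f2 F)"
  unfolding TF_def by (intro sh_diff sh_mult sh_bracket1 sh_LambdaF sh_PiF assms)

lemma sh_deriv1: assumes "sh G" "z1 \<in> upper_half" "z2 \<in> upper_half"
  shows "((\<lambda>w. G w z2) has_field_derivative pd1 G z1 z2) (at z1 within T)"
proof -
  have "(\<lambda>w. G w z2) holomorphic_on upper_half" using assms sh_def by blast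
  from holomorphic_derivI[OF this open_H assms(2)] show ?thesis by (simp add: pd1_def)
qed

lemma sh_deriv2: assumes "sh G" "z1 \<in> upper_half" "z2 \<in> upper_half"
  shows "((\<lambda>w. G z1 w) has_field_derivative pd2 G z1 z2) (at z2 within T)"
proof -
  have "(\<lambda>w. G z1 w) holomorphic_on upper_half" using assms sh_def by blast
  from holomorphic_derivI[OF this open_H assms(3)] show ?thesis by (simp add: pd2_def)
qed

lemma sh_cont: assumes "sh G" shows "continuous_on (upper_half \<times> upper_half) (\<lambda>(a,b). G a b)"
  using assms sh_def by blast

lemma zero_pd1: assumes "open V" "\<And>a b. (a,b) \<in> V \<Longrightarrow> G a b = 0" "(a,b) \<in> V"
  shows "pd1 G a b = 0"
proof -
  have o: "open ((\<lambda>w. (w,b)) -` V)" by (rule continuous_open_vimage[OF assms(1)]) (intro continuous_intros)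
  have "((\<lambda>w. G w b) has_field_derivative 0) (at a)"
    by (rule has_field_derivative_transform_within_open[OF DERIV_const o]) (use assms in auto)
  then show ?thesis unfolding pd1_def by (rule DERIV_imp_deriv)
qed

lemma zero_pd2: assumes "open V" "\<And>a b. (a,b) \<in> V \<Longrightarrow> G a b = 0" "(a,b) \<in> V"
  shows "pd2 G a b = 0"
proof -
  have o: "open ((\<lambda>w. (a,w)) -` V)" by (rule continuous_open_vimage[OF assms(1)]) (intro continuous_intros)
  have "((\<lambda>w. G a w) has_field_derivative 0) (at b)"
    by (rule has_field_derivative_transform_within_open[OF DERIV_const o]) (use assms in auto)
  then show ?thesis unfolding pd2_def by (rule DERIV_imp_deriv)
qed

lemma zero_pd: assumes "open V" "\<And>a b. (a,b) \<in> V \<Longrightarrow> G a b = 0" "(a,b) \<in> V"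
  shows "pd i G a b = 0"
  using zero_pd1[OF assms] zero_pd2[OF assms] by (simp add: pd_def)

definition jj :: "real \<Rightarrow> complex \<Rightarrow> complex" where "jj c z = of_real c * z + 1"
definition mm :: "real \<Rightarrow> complex \<Rightarrow> complex" where "mm c z = z / jj c z"

lemma jj_nz: "z \<in> upper_half \<Longrightarrow> jj c z \<noteq> 0"
proof
  assume z: "z \<in> upper_half" and j: "jj c z = 0"
  then have "Im (jj c z) = 0" "Re (jj c z) = 0" by auto
  then have "c * Im z = 0" "c * Re z + 1 = 0" by (auto simp: jj_def)
  with z show False by (auto simp: upper_half_def)
qed

lemma mm_H: assumes "z \<in> upper_half" shows "mm c z \<in> upper_half"
proof -
  have n: "jj c z \<noteq> 0" using jj_nz[OF assms] .
  have "Im (mm c z) = Im z / ((Re (jj c z))^2 + (Im (jj c z))^2)"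
    unfolding mm_def by (simp add: Im_divide jj_def algebra_simps power2_eq_square)
  moreover have "(Re (jj c z))^2 + (Im (jj c z))^2 > 0" using n
    by (metis complex_eq_0 add_nonneg_pos add_pos_nonneg not_less_iff_gr_or_eq zero_le_power2 zero_less_power2)
  ultimately show ?thesis using assms by (simp add: upper_half_def)
qed

lemma mm_deriv: assumes "z \<in> upper_half" shows "(mm c has_field_derivative 1 / (jj c z)^2) (at z)"
proof -
  have n: "jj c z \<noteq> 0" using jj_nz[OF assms] .
  have "((\<lambda>z. z / (of_real c * z + 1)) has_field_derivative 1 / (jj c z)^2) (at z)"
    using n by (auto intro!: derivative_eq_intros simp: jj_def field_simps power2_eq_square)
  then show ?thesis by (simp add: mm_def[abs_def] jj_def)
qed

lemma jj_deriv: "((\<lambda>w. jj c w) has_field_derivative of_real c) (at z)"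
  unfolding jj_def by (auto intro!: derivative_eq_intros)

lemma chain1:
  assumes "sh G" and R: "\<And>z1 z2. z1 \<in> upper_half \<Longrightarrow> z2 \<in> upper_half \<Longrightarrow> G (mm c1 z1) (mm c2 z2) = R z1 z2"
    and z: "z1 \<in> upper_half" "z2 \<in> upper_half"
    and D: "((\<lambda>w. R w z2) has_field_derivative R1) (at z1)"
  shows "pd1 G (mm c1 z1) (mm c2 z2) = R1 * (jj c1 z1)^2"
proof -
  have "((\<lambda>w. G (mm c1 w) (mm c2 z2)) has_field_derivative pd1 G (mm c1 z1) (mm c2 z2) * (1 / (jj c1 z1)^2)) (at z1)"
    by (rule DERIV_chain2[OF sh_deriv1[OF assms(1) mm_H[OF z(1)] mm_H[OF z(2)]] mm_deriv[OF z(1)]])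
  then have "((\<lambda>w. R w z2) has_field_derivative pd1 G (mm c1 z1) (mm c2 z2) * (1 / (jj c1 z1)^2)) (at z1)"
    by (rule has_field_derivative_transform_within_open[OF _ open_H z(1)]) (use R z in auto)
  from DERIV_unique[OF this D] show ?thesis using jj_nz[OF z(1), of c1] by (simp add: field_simps)
qed

lemma chain2:
  assumes "sh G" and R: "\<And>z1 z2. z1 \<in> upper_half \<Longrightarrow> z2 \<in> upper_half \<Longrightarrow> G (mm c1 z1) (mm c2 z2) = R z1 z2"
    and z: "z1 \<in> upper_half" "z2 \<in> upper_half"
    and D: "((\<lambda>w. R z1 w) has_field_derivative R2) (at z2)"
  shows "pd2 G (mm c1 z1) (mm c2 z2) = R2 * (jj c2 z2)^2"
proof -
  have "((\<lambda>w. G (mm c1 z1) (mm c2 w)) has_field_derivative pd2 G (mm c1 z1) (mm c2 z2) * (1 / (jj c2 z2)^2)) (at z2)"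
    by (rule DERIV_chain2[OF sh_deriv2[OF assms(1) mm_H[OF z(1)] mm_H[OF z(2)]] mm_deriv[OF z(2)]])
  then have "((\<lambda>w. R z1 w) has_field_derivative pd2 G (mm c1 z1) (mm c2 z2) * (1 / (jj c2 z2)^2)) (at z2)"
    by (rule has_field_derivative_transform_within_open[OF _ open_H z(2)]) (use R z in auto)
  from DERIV_unique[OF this D] show ?thesis using jj_nz[OF z(2), of c2] by (simp add: field_simps)
qed

locale transl =
  fixes F :: "complex \<Rightarrow> complex \<Rightarrow> complex" and f1 f2 :: int and c1 c2 :: real
  assumes shF: "sh F"
    and modF: "\<And>z1 z2. z1 \<in> upper_half \<Longrightarrow> z2 \<in> upper_half \<Longrightarrow>
       F (mm c1 z1) (mm c2 z2) = jj c1 z1 powi f1 * jj c2 z2 powi f2 * F z1 z2"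
begin

lemma T1: assumes z: "z1 \<in> upper_half" "z2 \<in> upper_half"
  shows "pd1 F (mm c1 z1) (mm c2 z2) = (jj c1 z1)^2 * (jj c1 z1 powi f1 * jj c2 z2 powi f2) *
     (pd1 F z1 z2 + of_int f1 * (of_real c1 / jj c1 z1) * F z1 z2)"
proof -
  have n: "jj c1 z1 \<noteq> 0" by (rule jj_nz[OF z(1)])
  have "((\<lambda>w. jj c1 w powi f1 * jj c2 z2 powi f2 * F w z2) has_field_derivative
      of_int f1 * jj c1 z1 powi (f1 - 1) * of_real c1 * jj c2 z2 powi f2 * F z1 z2 + jj c1 z1 powi f1 * jj c2 z2 powi f2 * pd1 F z1 z2) (at z1)"
    using n by (auto intro!: derivative_eq_intros jj_deriv sh_deriv1[OF shF z])
  from chain1[OF shF modF z this] show ?thesis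
    using n by (simp add: power_int_diff field_simps)
qed

lemma T2: assumes z: "z1 \<in> upper_half" "z2 \<in> upper_half"
  shows "pd2 F (mm c1 z1) (mm c2 z2) = (jj c2 z2)^2 * (jj c1 z1 powi f1 * jj c2 z2 powi f2) *
     (pd2 F z1 z2 + of_int f2 * (of_real c2 / jj c2 z2) * F z1 z2)"
proof -
  have n: "jj c2 z2 \<noteq> 0" by (rule jj_nz[OF z(2)])
  have "((\<lambda>w. jj c1 z1 powi f1 * jj c2 w powi f2 * F z1 w) has_field_derivative
      jj c1 z1 powi f1 * (of_int f2 * jj c2 z2 powi (f2 - 1) * of_real c2) * F z1 z2 + jj c1 z1 powi f1 * jj c2 z2 powi f2 * pd2 F z1 z2) (at z2)"
    using n by (auto intro!: derivative_eq_intros jj_deriv sh_deriv2[OF shF z])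
  from chain2[OF shF modF z this] show ?thesis
    using n by (simp add: power_int_diff field_simps)
qed

lemma T11: assumes z: "z1 \<in> upper_half" "z2 \<in> upper_half"
  shows "pd1 (pd1 F) (mm c1 z1) (mm c2 z2) = (jj c1 z1)^4 * (jj c1 z1 powi f1 * jj c2 z2 powi f2) *
     (pd1 (pd1 F) z1 z2 + 2 * of_int (f1 + 1) * (of_real c1 / jj c1 z1) * pd1 F z1 z2
      + of_int f1 * of_int (f1 + 1) * (of_real c1 / jj c1 z1)^2 * F z1 z2)"
proof -
  have n: "jj c1 z1 \<noteq> 0" by (rule jj_nz[OF z(1)])
  have "((\<lambda>w. (jj c1 w)^2 * (jj c1 w powi f1 * jj c2 z2 powi f2) *
     (pd1 F w z2 + of_int f1 * (of_real c1 / jj c1 w) * F w z2)) has_field_derivative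
     (jj c1 z1)^2 * (jj c1 z1 powi f1 * jj c2 z2 powi f2) *
     (pd1 (pd1 F) z1 z2 + 2 * of_int (f1 + 1) * (of_real c1 / jj c1 z1) * pd1 F z1 z2
      + of_int f1 * of_int (f1 + 1) * (of_real c1 / jj c1 z1)^2 * F z1 z2)) (at z1)"
    using n apply (auto intro!: derivative_eq_intros jj_deriv sh_deriv1[OF shF z] sh_deriv1[OF sh_pd1[OF shF] z])
    apply (simp add: power_int_diff)
    apply (simp add: divide_simps)
    apply (simp add: algebra_simps power2_eq_square power4_eq_xxxx)
    done
  from chain1[OF sh_pd1[OF shF] T1 z this] show ?thesis
    using n by (simp add: field_simps)
qed

lemma T22: assumes z: "z1 \<in> upper_half" "z2 \<in> upper_half"
  shows "pd2 (pd2 F) (mm c1 z1) (mm c2 z2) = (jj c2 z2)^4 * (jj c1 z1 powi f1 * jj c2 z2 powi f2) *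
     (pd2 (pd2 F) z1 z2 + 2 * of_int (f2 + 1) * (of_real c2 / jj c2 z2) * pd2 F z1 z2
      + of_int f2 * of_int (f2 + 1) * (of_real c2 / jj c2 z2)^2 * F z1 z2)"
proof -
  have n: "jj c2 z2 \<noteq> 0" by (rule jj_nz[OF z(2)])
  have "((\<lambda>w. (jj c2 w)^2 * (jj c1 z1 powi f1 * jj c2 w powi f2) *
     (pd2 F z1 w + of_int f2 * (of_real c2 / jj c2 w) * F z1 w)) has_field_derivative
     (jj c2 z2)^2 * (jj c1 z1 powi f1 * jj c2 z2 powi f2) *
     (pd2 (pd2 F) z1 z2 + 2 * of_int (f2 + 1) * (of_real c2 / jj c2 z2) * pd2 F z1 z2
      + of_int f2 * of_int (f2 + 1) * (of_real c2 / jj c2 z2)^2 * F z1 z2)) (at z2)"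
    using n apply (auto intro!: derivative_eq_intros jj_deriv sh_deriv2[OF shF z] sh_deriv2[OF sh_pd2[OF shF] z])
    apply (simp add: power_int_diff)
    apply (simp add: divide_simps)
    apply (simp add: algebra_simps power2_eq_square power4_eq_xxxx)
    done
  from chain2[OF sh_pd2[OF shF] T2 z this] show ?thesis
    using n by (simp add: field_simps)
qed

lemma T12: assumes z: "z1 \<in> upper_half" "z2 \<in> upper_half"
  shows "pd1 (pd2 F) (mm c1 z1) (mm c2 z2) = (jj c1 z1)^2 * (jj c2 z2)^2 * (jj c1 z1 powi f1 * jj c2 z2 powi f2) *
     (pd1 (pd2 F) z1 z2 + of_int f1 * (of_real c1 / jj c1 z1) * pd2 F z1 z2
      + of_int f2 * (of_real c2 / jj c2 z2) * pd1 F z1 z2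
      + of_int f1 * of_int f2 * (of_real c1 / jj c1 z1) * (of_real c2 / jj c2 z2) * F z1 z2)"
proof -
  have n: "jj c1 z1 \<noteq> 0" by (rule jj_nz[OF z(1)])
  have n2: "jj c2 z2 \<noteq> 0" by (rule jj_nz[OF z(2)])
  have "((\<lambda>w. (jj c2 z2)^2 * (jj c1 w powi f1 * jj c2 z2 powi f2) *
     (pd2 F w z2 + of_int f2 * (of_real c2 / jj c2 z2) * F w z2)) has_field_derivative
     (jj c2 z2)^2 * (jj c1 z1 powi f1 * jj c2 z2 powi f2) *
     (pd1 (pd2 F) z1 z2 + of_int f1 * (of_real c1 / jj c1 z1) * pd2 F z1 z2
      + of_int f2 * (of_real c2 / jj c2 z2) * pd1 F z1 z2
      + of_int f1 * of_int f2 * (of_real c1 / jj c1 z1) * (of_real c2 / jj c2 z2) * F z1 z2)) (at z1)"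
    using n n2 apply (auto intro!: derivative_eq_intros jj_deriv sh_deriv1[OF shF z] sh_deriv1[OF sh_pd2[OF shF] z])
    apply (simp add: power_int_diff)
    apply (simp add: divide_simps)
    apply (simp add: algebra_simps power2_eq_square power4_eq_xxxx)
    done
  from chain1[OF sh_pd2[OF shF] T2 z this] show ?thesis
    using n by (simp add: field_simps)
qed

end

lemma powi_2f: assumes j: "(j::complex) \<noteq> 0" shows "j powi (2*f) = (j powi f)^2"
proof -
  have "j powi (2*f) = j powi (f+f)" by (rule arg_cong[where f="\<lambda>k. j powi k"]) simp
  also have "\<dots> = j powi f * j powi f" by (simp only: power_int_add[OF disjI1[OF j]])
  finally show ?thesis by (simp only: power2_eq_square)
qed
lemma powi_2f2: assumes j: "(j::complex) \<noteq> 0" shows "j powi (2*f+2) = (j powi f)^2 * j^2"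
proof -
  have "j powi (2*f+2) = j powi (2*f) * j powi 2" by (simp only: power_int_add[OF disjI1[OF j]])
  then show ?thesis by (simp only: powi_2f[OF j] power_int_numeral)
qed
lemma powi_2f4: assumes j: "(j::complex) \<noteq> 0" shows "j powi (2*f+4) = (j powi f)^2 * j^4"
proof -
  have "j powi (2*f+4) = j powi (2*f) * j powi 4" by (simp only: power_int_add[OF disjI1[OF j]])
  then show ?thesis by (simp only: powi_2f[OF j] power_int_numeral)
qed
lemma powi_4f4: assumes j: "(j::complex) \<noteq> 0" shows "j powi (4*f+4) = (j powi f)^4 * j^4"
proof -
  have "j powi (4*f+4) = j powi (2*(2*f)) * j powi 4"
    by (simp only: power_int_add[OF disjI1[OF j], symmetric] mult.assoc[symmetric]) simp
  also have "\<dots> = ((j powi f)^2)^2 * j^4" by (simp only: powi_2f[OF j, of "2*f"] powi_2f[OF j, of f] power_int_numeral)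
  also have "\<dots> = (j powi f)^4 * j^4" by (simp only: power2_eq_square power4_eq_xxxx mult.assoc)
  finally show ?thesis .
qed

lemma pd_1: "pd 1 G = pd1 G" by (simp add: pd_def)
lemma pd_2: "pd 2 G = pd2 G" by (simp add: pd_def)

lemma alg_Lam: fixes k P Q X A Y1 Y2 j1 j2 a1 a2 f1 f2 :: complex
  shows "k * (P*Q*X * (j1^2 * j2^2 * (P*Q) * (A + f1*a1*Y2 + f2*a2*Y1 + f1*f2*a1*a2*X)) - (j1^2*(P*Q)*(Y1 + f1*a1*X)) * (j2^2*(P*Q)*(Y2 + f2*a2*X)))
     = (P^2*j1^2) * (Q^2*j2^2) * (k * (X*A - Y1*Y2))"
  by (simp add: algebra_simps power2_eq_square power4_eq_xxxx)

lemma alg_Pi1: fixes k P Q X A Y j a f g :: complex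
  assumes "g = f + 1"
  shows "k * (f * (P*Q*X) * (j^4 * (P*Q) * (A + 2*g*a*Y + f*g*a^2*X)) - g * (j^2*(P*Q)*(Y + f*a*X))^2)
     = (P^2*j^4) * Q^2 * (k * (f*X*A - g*Y^2))"
  using assms by (simp add: algebra_simps power2_eq_square power4_eq_xxxx)

lemma alg_Pi2: fixes k P Q X A Y j a f g :: complex
  assumes "g = f + 1"
  shows "k * (f * (P*Q*X) * (j^4 * (P*Q) * (A + 2*g*a*Y + f*g*a^2*X)) - g * (j^2*(P*Q)*(Y + f*a*X))^2)
     = P^2 * (Q^2*j^4) * (k * (f*X*A - g*Y^2))"
  using assms by (simp add: algebra_simps power2_eq_square power4_eq_xxxx)

context transl begin

lemma TLam: assumes z: "z1 \<in> upper_half" "z2 \<in> upper_half"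
  shows "LambdaF F (mm c1 z1) (mm c2 z2) = jj c1 z1 powi (2*f1+2) * jj c2 z2 powi (2*f2+2) * LambdaF F z1 z2"
proof -
  have n: "jj c1 z1 \<noteq> 0" by (rule jj_nz[OF z(1)])
  have n2: "jj c2 z2 \<noteq> 0" by (rule jj_nz[OF z(2)])
  show ?thesis unfolding LambdaF_def modF[OF z] T1[OF z] T2[OF z] T12[OF z] powi_2f2[OF n] powi_2f2[OF n2]
    by (rule alg_Lam)
qed

lemma TPi1: assumes z: "z1 \<in> upper_half" "z2 \<in> upper_half"
  shows "PiOp 1 f1 F (mm c1 z1) (mm c2 z2) = jj c1 z1 powi (2*f1+4) * jj c2 z2 powi (2*f2) * PiOp 1 f1 F z1 z2"
proof -
  have n: "jj c1 z1 \<noteq> 0" by (rule jj_nz[OF z(1)])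
  have n2: "jj c2 z2 \<noteq> 0" by (rule jj_nz[OF z(2)])
  show ?thesis unfolding PiOp_def pd_1 modF[OF z] T1[OF z] T11[OF z] powi_2f4[OF n] powi_2f[OF n2]
    by (rule alg_Pi1) simp
qed

lemma TPi2: assumes z: "z1 \<in> upper_half" "z2 \<in> upper_half"
  shows "PiOp 2 f2 F (mm c1 z1) (mm c2 z2) = jj c1 z1 powi (2*f1) * jj c2 z2 powi (2*f2+4) * PiOp 2 f2 F z1 z2"
proof -
  have n: "jj c1 z1 \<noteq> 0" by (rule jj_nz[OF z(1)])
  have n2: "jj c2 z2 \<noteq> 0" by (rule jj_nz[OF z(2)])
  have t: "(2::nat) \<noteq> 1" by simp
  show ?thesis unfolding PiOp_def pd_2 modF[OF z] T2[OF z] T22[OF z] powi_2f4[OF n2] powi_2f[OF n]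
    by (rule alg_Pi2) simp
qed

lemma TPi: assumes z: "z1 \<in> upper_half" "z2 \<in> upper_half"
  shows "PiF f1 f2 F (mm c1 z1) (mm c2 z2) = jj c1 z1 powi (4*f1+4) * jj c2 z2 powi (4*f2+4) * PiF f1 f2 F z1 z2"
proof -
  have n: "jj c1 z1 \<noteq> 0" by (rule jj_nz[OF z(1)])
  have n2: "jj c2 z2 \<noteq> 0" by (rule jj_nz[OF z(2)])
  show ?thesis unfolding PiF_def TPi1[OF z] TPi2[OF z] powi_2f4[OF n] powi_2f4[OF n2] powi_2f[OF n] powi_2f[OF n2]
     powi_4f4[OF n] powi_4f4[OF n2]
    by (simp add: algebra_simps power2_eq_square power4_eq_xxxx)
qed

end

lemma L1:
  fixes S :: "'w \<Rightarrow> complex" and a b :: "'w \<Rightarrow> nat"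
  assumes fin: "finite W"
    and h: "\<And>n::int. (\<Sum>w\<in>W. S w * (p1 + q1 * of_int n)^(a w) * (p2 + q2 * of_int n)^(b w)) = 0"
  shows "(\<Sum>w\<in>W. S w * (p1 + q1 * t)^(a w) * (p2 + q2 * t)^(b w)) = 0"
proof -
  define P where "P = (\<Sum>w\<in>W. smult (S w) ([:p1, q1:]^(a w) * [:p2, q2:]^(b w)))"
  have ev: "poly P x = (\<Sum>w\<in>W. S w * (p1 + q1 * x)^(a w) * (p2 + q2 * x)^(b w))" for x
    unfolding P_def poly_sum by (simp add: mult_ac)
  have "P = 0"
  proof (rule ccontr)
    assume "P \<noteq> 0"
    then have "finite {x. poly P x = 0}" by (rule poly_roots_finite)
    moreover have "range (of_int :: int \<Rightarrow> complex) \<subseteq> {x. poly P x = 0}"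
      using h by (auto simp: ev)
    moreover have "infinite (range (of_int :: int \<Rightarrow> complex))"
    proof
      assume "finite (range (of_int :: int \<Rightarrow> complex))"
      then have "finite (UNIV :: int set)" by (rule finite_imageD) (auto simp: inj_on_def)
      then show False by simp
    qed
    ultimately show False using finite_subset by blast
  qed
  then show ?thesis using ev[of t] by simp
qed

lemma coeff_sum_monom':
  fixes k :: "'w \<Rightarrow> complex"
  assumes "finite A"
  shows "coeff (\<Sum>w\<in>A. smult (k w) (monom 1 (a w))) i = (\<Sum>w\<in>{w\<in>A. a w = i}. k w)"
  unfolding coeff_sum using assms by (simp add: sum.inter_filter[symmetric] if_distrib cong: if_cong)

lemma L2:
  fixes S :: "'w \<Rightarrow> complex" and a b :: "'w \<Rightarrow> nat"
  assumes fin: "finite W" and inj: "inj_on (\<lambda>w. (a w, b w)) W"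
    and h: "\<And>u v. (\<Sum>w\<in>W. S w * u^(a w) * v^(b w)) = 0"
    and w0: "w0 \<in> W"
  shows "S w0 = 0"
proof -
  have c1: "(\<Sum>w\<in>{w\<in>W. a w = a w0}. S w * v^(b w)) = 0" for v
  proof -
    define P where "P = (\<Sum>w\<in>W. smult (S w * v^(b w)) (monom 1 (a w)))"
    have "poly P u = 0" for u
      unfolding P_def poly_sum using h[of u v] by (simp add: poly_monom mult_ac)
    then have "P = 0" using poly_all_0_iff_0 by blast
    then have "coeff P (a w0) = 0" by simp
    then show ?thesis unfolding P_def coeff_sum_monom'[OF fin] .
  qed
  define Q where "Q = (\<Sum>w\<in>{w\<in>W. a w = a w0}. smult (S w) (monom 1 (b w)))"
  have "poly Q v = 0" for v
    unfolding Q_def poly_sum using c1[of v] by (simp add: poly_monom mult_ac)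
  then have "Q = 0" using poly_all_0_iff_0 by blast
  then have "coeff Q (b w0) = 0" by simp
  moreover have "coeff Q (b w0) = (\<Sum>w\<in>{w \<in> {w\<in>W. a w = a w0}. b w = b w0}. S w)"
    unfolding Q_def by (rule coeff_sum_monom') (use fin in auto)
  moreover have "{w \<in> {w\<in>W. a w = a w0}. b w = b w0} = {w0}"
    using inj w0 by (auto simp: inj_on_def)
  ultimately show ?thesis by simp
qed

lemma powi_shift:
  fixes u :: complex
  assumes "u \<noteq> 0" "k + N \<ge> 0" "N \<ge> 0"
  shows "u powi k * u ^ nat N = u ^ nat (k + N)"
proof -
  have "u powi k * u ^ nat N = u powi k * u powi N" using assms by (simp add: power_int_def)
  also have "\<dots> = u powi (k + N)" using assms by (simp add: power_int_add)
  also have "\<dots> = u ^ nat (k + N)" using assms by (simp add: power_int_def)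
  finally show ?thesis .
qed

lemma sepC:
  fixes S :: "int \<times> int \<Rightarrow> complex" and z1 z2 :: complex and om1 om2 :: real
  assumes fin: "finite W" and z: "z1 \<noteq> 0" "z2 \<noteq> 0" and om: "om1 \<noteq> om2"
    and nz1: "\<And>n m::int. of_real (of_int n + of_int m * om1) * z1 + 1 \<noteq> 0"
    and nz2: "\<And>n m::int. of_real (of_int n + of_int m * om2) * z2 + 1 \<noteq> 0"
    and h: "\<And>n m::int. (\<Sum>w\<in>W. (of_real (of_int n + of_int m * om1) * z1 + 1) powi fst w *
              (of_real (of_int n + of_int m * om2) * z2 + 1) powi snd w * S w) = 0"
    and w0: "w0 \<in> W"
  shows "S w0 = 0"
proof -
  define N where "N = (\<Sum>w\<in>W. \<bar>fst w\<bar> + \<bar>snd w\<bar>)"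
  have N: "\<bar>fst w\<bar> \<le> N" "\<bar>snd w\<bar> \<le> N" if "w \<in> W" for w
  proof -
    have "\<bar>fst w\<bar> + \<bar>snd w\<bar> \<le> N" unfolding N_def
      by (rule member_le_sum[OF that _ fin]) auto
    then show "\<bar>fst w\<bar> \<le> N" "\<bar>snd w\<bar> \<le> N" by auto
  qed
  have N0: "N \<ge> 0" unfolding N_def by (rule sum_nonneg) auto
  define a :: "int \<times> int \<Rightarrow> nat" where "a w = nat (fst w + N)" for w
  define b :: "int \<times> int \<Rightarrow> nat" where "b w = nat (snd w + N)" for w
  have inj: "inj_on (\<lambda>w. (a w, b w)) W"
  proof (rule inj_onI)
    fix x y assume "x \<in> W" "y \<in> W" "(a x, b x) = (a y, b y)"
    then show "x = y" using N[of x] N[of y] unfolding a_def b_def by (auto simp: prod_eq_iff)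
  qed
  have h1: "(\<Sum>w\<in>W. S w * ((of_real (of_int m * om1) * z1 + 1) + z1 * of_int n)^(a w) *
                 ((of_real (of_int m * om2) * z2 + 1) + z2 * of_int n)^(b w)) = 0" for n m :: int
  proof -
    define u where "u = of_real (of_int n + of_int m * om1) * z1 + 1"
    define v where "v = of_real (of_int n + of_int m * om2) * z2 + 1"
    have u: "u \<noteq> 0" "v \<noteq> 0" unfolding u_def v_def using nz1 nz2 by auto
    have e0: "(\<Sum>w\<in>W. u powi fst w * v powi snd w * S w) = 0"
      using h[of n m] by (simp add: u_def v_def)
    have "(\<Sum>w\<in>W. (u powi fst w * u ^ nat N) * (v powi snd w * v ^ nat N) * S w) =
       (\<Sum>w\<in>W. u powi fst w * v powi snd w * S w) * (u ^ nat N * v ^ nat N)"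
      unfolding sum_distrib_right by (rule sum.cong) (simp_all add: mult_ac)
    then have "(\<Sum>w\<in>W. (u powi fst w * u ^ nat N) * (v powi snd w * v ^ nat N) * S w) = 0"
      using e0 by simp
    then have "(\<Sum>w\<in>W. S w * u ^ a w * v ^ b w) = 0"
    proof -
      assume e: "(\<Sum>w\<in>W. (u powi fst w * u ^ nat N) * (v powi snd w * v ^ nat N) * S w) = 0"
      have "(\<Sum>w\<in>W. (u powi fst w * u ^ nat N) * (v powi snd w * v ^ nat N) * S w) = (\<Sum>w\<in>W. S w * u ^ a w * v ^ b w)"
      proof (rule sum.cong[OF refl])
        fix w assume "w \<in> W"
        then show "(u powi fst w * u ^ nat N) * (v powi snd w * v ^ nat N) * S w = S w * u ^ a w * v ^ b w"
          using N[of w] N0 u unfolding a_def b_def by (simp add: powi_shift)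
      qed
      then show ?thesis using e by simp
    qed
    moreover have "u = (of_real (of_int m * om1) * z1 + 1) + z1 * of_int n" "v = (of_real (of_int m * om2) * z2 + 1) + z2 * of_int n"
      unfolding u_def v_def by (simp_all add: algebra_simps)
    ultimately show ?thesis by simp
  qed
  have h2: "(\<Sum>w\<in>W. S w * ((of_real (of_int m * om1) * z1 + 1) + z1 * t)^(a w) *
                 ((of_real (of_int m * om2) * z2 + 1) + z2 * t)^(b w)) = 0" for t :: complex and m :: int
    by (rule L1[OF fin]) (rule h1)
  have h3: "(\<Sum>w\<in>W. S w * ((z1 * t + 1) + (of_real om1 * z1) * of_int m)^(a w) *
                 ((z2 * t + 1) + (of_real om2 * z2) * of_int m)^(b w)) = 0" for t :: complex and m :: int
  proof -
    have e1: "(of_real (of_int m * om1) * z1 + 1) + z1 * t = (z1 * t + 1) + (of_real om1 * z1) * of_int m"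
         "(of_real (of_int m * om2) * z2 + 1) + z2 * t = (z2 * t + 1) + (of_real om2 * z2) * of_int m"
      by (simp_all add: algebra_simps)
    from h2[of m t] show ?thesis unfolding e1 .
  qed
  have h4: "(\<Sum>w\<in>W. S w * ((z1 * t + 1) + (of_real om1 * z1) * s)^(a w) *
                 ((z2 * t + 1) + (of_real om2 * z2) * s)^(b w)) = 0" for t s :: complex
    by (rule L1[OF fin]) (rule h3)
  have h5: "(\<Sum>w\<in>W. S w * u^(a w) * v^(b w)) = 0" for u v :: complex
  proof -
    define A where "A = (u - 1) / z1"
    define B where "B = (v - 1) / z2"
    have omc: "(of_real om1 :: complex) - of_real om2 \<noteq> 0" using om by simp
    define s where "s = (A - B) / (of_real om1 - of_real om2)"
    define t where "t = A - of_real om1 * s"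
    have "(z1 * t + 1) + (of_real om1 * z1) * s = u"
      unfolding t_def A_def using z by (simp add: field_simps)
    moreover have "(z2 * t + 1) + (of_real om2 * z2) * s = v"
    proof -
      have ss: "(of_real om1 - of_real om2) * s = A - B" unfolding s_def using omc by simp
      have "t + of_real om2 * s = A - (of_real om1 - of_real om2) * s" unfolding t_def by (simp add: algebra_simps)
      then have "t + of_real om2 * s = B" using ss by simp
      then have "z2 * (t + of_real om2 * s) + 1 = v" unfolding B_def using z by (simp add: field_simps)
      then show ?thesis by (simp add: algebra_simps)
    qed
    ultimately show ?thesis using h4[of t s] by simp
  qed
  show ?thesis by (rule L2[OF fin inj h5 w0])
qed

definition mnm :: "(complex \<Rightarrow> complex \<Rightarrow> complex) list \<Rightarrow> nat list \<Rightarrow> complex \<Rightarrow> complex \<Rightarrow> complex" where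
  "mnm gs \<alpha> z1 z2 = (\<Prod>i<length gs. (gs ! i) z1 z2 ^ (\<alpha> ! i))"

definition wsum :: "(nat \<Rightarrow> int) \<Rightarrow> nat \<Rightarrow> nat list \<Rightarrow> int" where
  "wsum wt n \<alpha> = (\<Sum>i<n. wt i * int (\<alpha> ! i))"

lemma prod_powi:
  fixes j :: complex
  assumes "j \<noteq> 0" "finite I"
  shows "(\<Prod>i\<in>I. (j powi k i) ^ n i) = j powi (\<Sum>i\<in>I. k i * int (n i))"
  using assms(2)
proof (induction I rule: finite_induct)
  case empty then show ?case by simp
next
  case (insert x I)
  have "(j powi k x) ^ n x = j powi (k x * int (n x))"
    by (simp add: power_int_mult)
  with insert show ?case using assms(1) by (simp add: power_int_add)
qed

lemma mnm_trans:
  assumes z: "z1 \<in> upper_half" "z2 \<in> upper_half"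
    and md: "\<And>i. i < length gs \<Longrightarrow> (gs ! i) (mm c1 z1) (mm c2 z2) = jj c1 z1 powi wt1 i * jj c2 z2 powi wt2 i * (gs ! i) z1 z2"
  shows "mnm gs \<alpha> (mm c1 z1) (mm c2 z2) =
     jj c1 z1 powi wsum wt1 (length gs) \<alpha> * jj c2 z2 powi wsum wt2 (length gs) \<alpha> * mnm gs \<alpha> z1 z2"
proof -
  have "mnm gs \<alpha> (mm c1 z1) (mm c2 z2) = (\<Prod>i<length gs. (jj c1 z1 powi wt1 i) ^ (\<alpha> ! i) * (jj c2 z2 powi wt2 i) ^ (\<alpha> ! i) * (gs ! i) z1 z2 ^ (\<alpha> ! i))"
    unfolding mnm_def by (rule prod.cong[OF refl]) (simp add: md power_mult_distrib)
  also have "\<dots> = (\<Prod>i<length gs. (jj c1 z1 powi wt1 i) ^ (\<alpha> ! i)) * (\<Prod>i<length gs. (jj c2 z2 powi wt2 i) ^ (\<alpha> ! i)) * mnm gs \<alpha> z1 z2"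
    unfolding mnm_def by (simp add: prod.distrib)
  also have "\<dots> = jj c1 z1 powi wsum wt1 (length gs) \<alpha> * jj c2 z2 powi wsum wt2 (length gs) \<alpha> * mnm gs \<alpha> z1 z2"
    unfolding wsum_def using jj_nz[OF z(1)] jj_nz[OF z(2)] by (simp add: prod_powi)
  finally show ?thesis .
qed

lemma poly_eval_mnm: "poly_eval c gs z1 z2 = (\<Sum>\<alpha>\<in>{\<alpha>. c \<alpha> \<noteq> 0}. c \<alpha> * mnm gs \<alpha> z1 z2)"
  unfolding poly_eval_def mnm_def ..

lemma emb1_pair: "emb1 d (n, m) = of_int n + of_int m * omega1 d" by (simp add: emb1_def)
lemma emb2_pair: "emb2 d (n, m) = of_int n + of_int m * omega2 d" by (simp add: emb2_def)

lemma decomp: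
  fixes gs :: "(complex \<Rightarrow> complex \<Rightarrow> complex) list" and c :: "nat list \<Rightarrow> complex"
  assumes fin: "finite {\<alpha>. c \<alpha> \<noteq> 0}"
    and om: "omega1 d \<noteq> omega2 d"
    and md: "\<And>x z1 z2 i. z1 \<in> upper_half \<Longrightarrow> z2 \<in> upper_half \<Longrightarrow> i < length gs \<Longrightarrow>
        (gs ! i) (mm (emb1 d x) z1) (mm (emb2 d x) z2) = jj (emb1 d x) z1 powi wt1 i * jj (emb2 d x) z2 powi wt2 i * (gs ! i) z1 z2"
    and zero: "\<And>z1 z2. z1 \<in> upper_half \<Longrightarrow> z2 \<in> upper_half \<Longrightarrow> poly_eval c gs z1 z2 = 0"
    and z: "z1 \<in> upper_half" "z2 \<in> upper_half"
  shows "poly_eval (\<lambda>\<alpha>. if (wsum wt1 (length gs) \<alpha>, wsum wt2 (length gs) \<alpha>) = w then c \<alpha> else 0) gs z1 z2 = 0"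
proof -
  define A where "A = {\<alpha>. c \<alpha> \<noteq> 0}"
  define Wf where "Wf \<alpha> = (wsum wt1 (length gs) \<alpha>, wsum wt2 (length gs) \<alpha>)" for \<alpha>
  define S where "S w' = (\<Sum>\<alpha>\<in>{\<alpha>\<in>A. Wf \<alpha> = w'}. c \<alpha> * mnm gs \<alpha> z1 z2)" for w'
  have finA: "finite A" using fin by (simp add: A_def)
  have key: "(\<Sum>w'\<in>Wf ` A. (of_real (of_int n + of_int m * omega1 d) * z1 + 1) powi fst w' *
              (of_real (of_int n + of_int m * omega2 d) * z2 + 1) powi snd w' * S w') = 0" for n m :: int
  proof -
    have "0 = poly_eval c gs (mm (emb1 d (n,m)) z1) (mm (emb2 d (n,m)) z2)"
      using zero mm_H z by auto
    also have "\<dots> = (\<Sum>\<alpha>\<in>A. c \<alpha> * (jj (emb1 d (n,m)) z1 powi fst (Wf \<alpha>) * jj (emb2 d (n,m)) z2 powi snd (Wf \<alpha>) * mnm gs \<alpha> z1 z2))"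
      unfolding poly_eval_mnm A_def Wf_def
      by (rule sum.cong[OF refl]) (simp add: mnm_trans[OF z md[OF z]])
    also have "\<dots> = (\<Sum>w'\<in>Wf ` A. (\<Sum>\<alpha>\<in>{\<alpha>\<in>A. Wf \<alpha> = w'}. c \<alpha> * (jj (emb1 d (n,m)) z1 powi fst (Wf \<alpha>) * jj (emb2 d (n,m)) z2 powi snd (Wf \<alpha>) * mnm gs \<alpha> z1 z2)))"
      by (rule sum.image_gen[OF finA])
    also have "\<dots> = (\<Sum>w'\<in>Wf ` A. jj (emb1 d (n,m)) z1 powi fst w' * jj (emb2 d (n,m)) z2 powi snd w' * S w')"
      unfolding S_def sum_distrib_left
      by (rule sum.cong[OF refl], rule sum.cong[OF refl]) (auto simp: mult_ac)
    finally show ?thesis by (simp add: jj_def emb1_pair emb2_pair)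
  qed
  have zne: "z1 \<noteq> 0" "z2 \<noteq> 0" using z by (auto simp: upper_half_def)
  have Sz: "S w' = 0" if "w' \<in> Wf ` A" for w'
  proof (rule sepC[OF finite_imageI[OF finA] zne om _ _ key that])
    fix n m :: int
    show "of_real (of_int n + of_int m * omega1 d) * z1 + 1 \<noteq> 0"
      using jj_nz[OF z(1), of "of_int n + of_int m * omega1 d"] by (simp add: jj_def)
    show "of_real (of_int n + of_int m * omega2 d) * z2 + 1 \<noteq> 0"
      using jj_nz[OF z(2), of "of_int n + of_int m * omega2 d"] by (simp add: jj_def)
  qed
  have "poly_eval (\<lambda>\<alpha>. if Wf \<alpha> = w then c \<alpha> else 0) gs z1 z2 = (\<Sum>\<alpha>\<in>{\<alpha>\<in>A. Wf \<alpha> = w}. c \<alpha> * mnm gs \<alpha> z1 z2)"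
    unfolding poly_eval_mnm A_def by (rule sum.cong) auto
  also have "\<dots> = S w" by (simp add: S_def)
  also have "\<dots> = 0"
  proof (cases "w \<in> Wf ` A")
    case True then show ?thesis by (rule Sz)
  next
    case False
    then have e: "{\<alpha>\<in>A. Wf \<alpha> = w} = {}" by auto
    show ?thesis unfolding S_def e by simp
  qed
  finally show ?thesis by (simp add: Wf_def)
qed

type_synonym p3 = "nat \<times> nat \<times> nat \<Rightarrow> complex"

definition supp3 :: "p3 \<Rightarrow> (nat \<times> nat \<times> nat) set" where "supp3 c = {m. c m \<noteq> 0}"
definition mon3 :: "nat \<times> nat \<times> nat \<Rightarrow> complex \<Rightarrow> complex \<Rightarrow> complex \<Rightarrow> complex" where
  "mon3 m x y u = x ^ fst m * y ^ fst (snd m) * u ^ snd (snd m)"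
definition ev3 :: "p3 \<Rightarrow> complex \<Rightarrow> complex \<Rightarrow> complex \<Rightarrow> complex" where
  "ev3 c x y u = (\<Sum>m\<in>supp3 c. c m * mon3 m x y u)"

definition sh1 :: "nat \<times> nat \<times> nat \<Rightarrow> nat \<times> nat \<times> nat" where "sh1 m = (Suc (fst m), snd m)"
definition sh2 :: "nat \<times> nat \<times> nat \<Rightarrow> nat \<times> nat \<times> nat" where "sh2 m = (fst m, Suc (fst (snd m)), snd (snd m))"
definition sh3 :: "nat \<times> nat \<times> nat \<Rightarrow> nat \<times> nat \<times> nat" where "sh3 m = (fst m, fst (snd m), Suc (snd (snd m)))"

definition D1 :: "p3 \<Rightarrow> p3" where "D1 c m = of_nat (Suc (fst m)) * c (sh1 m)"
definition D2 :: "p3 \<Rightarrow> p3" where "D2 c m = of_nat (Suc (fst (snd m))) * c (sh2 m)"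
definition D3 :: "p3 \<Rightarrow> p3" where "D3 c m = of_nat (Suc (snd (snd m))) * c (sh3 m)"

lemma inj_sh: "inj sh1" "inj sh2" "inj sh3"
  by (auto simp: inj_def sh1_def sh2_def sh3_def prod_eq_iff)

lemma ev3_sub: assumes "finite S" "supp3 c \<subseteq> S"
  shows "ev3 c x y u = (\<Sum>m\<in>S. c m * mon3 m x y u)"
  unfolding ev3_def by (rule sum.mono_neutral_left) (use assms in \<open>auto simp: supp3_def\<close>)

lemma supp_D: "supp3 (D1 c) \<subseteq> sh1 -` supp3 c" "supp3 (D2 c) \<subseteq> sh2 -` supp3 c" "supp3 (D3 c) \<subseteq> sh3 -` supp3 c"
  by (auto simp: supp3_def D1_def D2_def D3_def)

lemma fin_vim: assumes "finite (supp3 c)"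
  shows "finite (sh1 -` supp3 c)" "finite (sh2 -` supp3 c)" "finite (sh3 -` supp3 c)"
  using assms inj_sh by (auto intro: finite_vimageI)

lemma fin_D: assumes "finite (supp3 c)"
  shows "finite (supp3 (D1 c))" "finite (supp3 (D2 c))" "finite (supp3 (D3 c))"
  using fin_vim[OF assms] supp_D finite_subset by metis+

lemma ev3_D1: assumes fin: "finite (supp3 c)"
  shows "ev3 (D1 c) x y u = (\<Sum>m\<in>supp3 c. c m * (of_nat (fst m) * x ^ (fst m - 1) * y ^ fst (snd m) * u ^ snd (snd m)))"
proof -
  have "ev3 (D1 c) x y u = (\<Sum>m\<in>sh1 -` supp3 c. D1 c m * mon3 m x y u)"
    by (rule ev3_sub[OF fin_vim(1)[OF fin] supp_D(1)])
  also have "\<dots> = (\<Sum>m\<in>sh1 -` supp3 c. (\<lambda>m. c m * (of_nat (fst m) * x ^ (fst m - 1) * y ^ fst (snd m) * u ^ snd (snd m))) (sh1 m))"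
    by (rule sum.cong[OF refl]) (simp add: D1_def sh1_def mon3_def mult_ac)
  also have "\<dots> = (\<Sum>m\<in>sh1 ` (sh1 -` supp3 c). c m * (of_nat (fst m) * x ^ (fst m - 1) * y ^ fst (snd m) * u ^ snd (snd m)))"
    by (subst sum.reindex) (auto simp: inj_on_def sh1_def prod_eq_iff)
  also have "\<dots> = (\<Sum>m\<in>supp3 c. c m * (of_nat (fst m) * x ^ (fst m - 1) * y ^ fst (snd m) * u ^ snd (snd m)))"
  proof (rule sum.mono_neutral_left[OF fin])
    show "sh1 ` (sh1 -` supp3 c) \<subseteq> supp3 c" by auto
    show "\<forall>i\<in>supp3 c - sh1 ` sh1 -` supp3 c. c i * (of_nat (fst i) * x ^ (fst i - 1) * y ^ fst (snd i) * u ^ snd (snd i)) = 0"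
    proof
      fix i assume i: "i \<in> supp3 c - sh1 ` sh1 -` supp3 c"
      have "fst i = 0"
      proof (rule ccontr)
        assume "fst i \<noteq> 0"
        then have "i = sh1 (fst i - 1, snd i)" by (simp add: sh1_def)
        then show False using i by (metis DiffD1 DiffD2 image_eqI vimageI2)
      qed
      then show "c i * (of_nat (fst i) * x ^ (fst i - 1) * y ^ fst (snd i) * u ^ snd (snd i)) = 0" by simp
    qed
  qed
  finally show ?thesis .
qed

lemma ev3_D2: assumes fin: "finite (supp3 c)"
  shows "ev3 (D2 c) x y u = (\<Sum>m\<in>supp3 c. c m * (of_nat (fst (snd m)) * x ^ fst m * y ^ (fst (snd m) - 1) * u ^ snd (snd m)))"
proof -
  have "ev3 (D2 c) x y u = (\<Sum>m\<in>sh2 -` supp3 c. D2 c m * mon3 m x y u)"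
    by (rule ev3_sub[OF fin_vim(2)[OF fin] supp_D(2)])
  also have "\<dots> = (\<Sum>m\<in>sh2 -` supp3 c. (\<lambda>m. c m * (of_nat (fst (snd m)) * x ^ fst m * y ^ (fst (snd m) - 1) * u ^ snd (snd m))) (sh2 m))"
    by (rule sum.cong[OF refl]) (simp add: D2_def sh2_def mon3_def mult_ac)
  also have "\<dots> = (\<Sum>m\<in>sh2 ` (sh2 -` supp3 c). c m * (of_nat (fst (snd m)) * x ^ fst m * y ^ (fst (snd m) - 1) * u ^ snd (snd m)))"
    by (subst sum.reindex) (auto simp: inj_on_def sh2_def prod_eq_iff)
  also have "\<dots> = (\<Sum>m\<in>supp3 c. c m * (of_nat (fst (snd m)) * x ^ fst m * y ^ (fst (snd m) - 1) * u ^ snd (snd m)))"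
  proof (rule sum.mono_neutral_left[OF fin])
    show "sh2 ` (sh2 -` supp3 c) \<subseteq> supp3 c" by auto
    show "\<forall>i\<in>supp3 c - sh2 ` sh2 -` supp3 c. c i * (of_nat (fst (snd i)) * x ^ fst i * y ^ (fst (snd i) - 1) * u ^ snd (snd i)) = 0"
    proof
      fix i assume i: "i \<in> supp3 c - sh2 ` sh2 -` supp3 c"
      have "fst (snd i) = 0"
      proof (rule ccontr)
        assume "fst (snd i) \<noteq> 0"
        then have "i = sh2 (fst i, fst (snd i) - 1, snd (snd i))" by (simp add: sh2_def)
        then show False using i by (metis DiffD1 DiffD2 image_eqI vimageI2)
      qed
      then show "c i * (of_nat (fst (snd i)) * x ^ fst i * y ^ (fst (snd i) - 1) * u ^ snd (snd i)) = 0" by simp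
    qed
  qed
  finally show ?thesis .
qed

lemma ev3_D3: assumes fin: "finite (supp3 c)"
  shows "ev3 (D3 c) x y u = (\<Sum>m\<in>supp3 c. c m * (of_nat (snd (snd m)) * x ^ fst m * y ^ fst (snd m) * u ^ (snd (snd m) - 1)))"
proof -
  have "ev3 (D3 c) x y u = (\<Sum>m\<in>sh3 -` supp3 c. D3 c m * mon3 m x y u)"
    by (rule ev3_sub[OF fin_vim(3)[OF fin] supp_D(3)])
  also have "\<dots> = (\<Sum>m\<in>sh3 -` supp3 c. (\<lambda>m. c m * (of_nat (snd (snd m)) * x ^ fst m * y ^ fst (snd m) * u ^ (snd (snd m) - 1))) (sh3 m))"
    by (rule sum.cong[OF refl]) (simp add: D3_def sh3_def mon3_def mult_ac)
  also have "\<dots> = (\<Sum>m\<in>sh3 ` (sh3 -` supp3 c). c m * (of_nat (snd (snd m)) * x ^ fst m * y ^ fst (snd m) * u ^ (snd (snd m) - 1)))"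
    by (subst sum.reindex) (auto simp: inj_on_def sh3_def prod_eq_iff)
  also have "\<dots> = (\<Sum>m\<in>supp3 c. c m * (of_nat (snd (snd m)) * x ^ fst m * y ^ fst (snd m) * u ^ (snd (snd m) - 1)))"
  proof (rule sum.mono_neutral_left[OF fin])
    show "sh3 ` (sh3 -` supp3 c) \<subseteq> supp3 c" by auto
    show "\<forall>i\<in>supp3 c - sh3 ` sh3 -` supp3 c. c i * (of_nat (snd (snd i)) * x ^ fst i * y ^ fst (snd i) * u ^ (snd (snd i) - 1)) = 0"
    proof
      fix i assume i: "i \<in> supp3 c - sh3 ` sh3 -` supp3 c"
      have "snd (snd i) = 0"
      proof (rule ccontr)
        assume "snd (snd i) \<noteq> 0"
        then have "i = sh3 (fst i, fst (snd i), snd (snd i) - 1)" by (simp add: sh3_def)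
        then show False using i by (metis DiffD1 DiffD2 image_eqI vimageI2)
      qed
      then show "c i * (of_nat (snd (snd i)) * x ^ fst i * y ^ fst (snd i) * u ^ (snd (snd i) - 1)) = 0" by simp
    qed
  qed
  finally show ?thesis .
qed

lemma ev3_deriv:
  assumes fin: "finite (supp3 c)"
    and dX: "(X has_field_derivative X') (at z)" and dY: "(Y has_field_derivative Y') (at z)"
    and dU: "(U has_field_derivative U') (at z)"
  shows "((\<lambda>w. ev3 c (X w) (Y w) (U w)) has_field_derivative
     ev3 (D1 c) (X z) (Y z) (U z) * X' + ev3 (D2 c) (X z) (Y z) (U z) * Y' + ev3 (D3 c) (X z) (Y z) (U z) * U') (at z)"
proof -
  have "((\<lambda>w. ev3 c (X w) (Y w) (U w)) has_field_derivative
     (\<Sum>m\<in>supp3 c. c m * (of_nat (fst m) * X z ^ (fst m - 1) * Y z ^ fst (snd m) * U z ^ snd (snd m)) * X'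
          + c m * (of_nat (fst (snd m)) * X z ^ fst m * Y z ^ (fst (snd m) - 1) * U z ^ snd (snd m)) * Y'
          + c m * (of_nat (snd (snd m)) * X z ^ fst m * Y z ^ fst (snd m) * U z ^ (snd (snd m) - 1)) * U')) (at z)"
    unfolding ev3_def mon3_def
    by (rule DERIV_sum) (auto intro!: derivative_eq_intros dX dY dU simp: algebra_simps)
  then show ?thesis
    by (simp add: ev3_D1[OF fin] ev3_D2[OF fin] ev3_D3[OF fin] sum.distrib sum_distrib_right)
qed

lemma xpow: "x * (of_nat a * x ^ (a - 1)) = of_nat a * (x::complex) ^ a"
  by (cases a) auto

lemma gen_euler:
  fixes x y u Na Nb Ne Px Py Pu X Y U C k1 k2 k3 :: complex
  assumes "x*(Na*Px) = Na*X" "y*(Nb*Py) = Nb*Y" "u*(Ne*Pu) = Ne*U"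
  shows "k1*x*(C*(Na*Px*Y*U)) + k2*y*(C*(Nb*X*Py*U)) + k3*u*(C*(Ne*X*Y*Pu)) = C*(X*Y*U)*(k1*Na + k2*Nb + k3*Ne)"
proof -
  have "k1*x*(C*(Na*Px*Y*U)) + k2*y*(C*(Nb*X*Py*U)) + k3*u*(C*(Ne*X*Y*Pu)) = k1*C*Y*U*(x*(Na*Px)) + k2*C*X*U*(y*(Nb*Py)) + k3*C*X*Y*(u*(Ne*Pu))"
    by (simp add: algebra_simps)
  also have "\<dots> = k1*C*Y*U*(Na*X) + k2*C*X*U*(Nb*Y) + k3*C*X*Y*(Ne*U)" by (simp only: assms)
  also have "\<dots> = C*(X*Y*U)*(k1*Na + k2*Nb + k3*Ne)" by (simp add: algebra_simps)
  finally show ?thesis .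
qed

lemma euler3:
  assumes fin: "finite (supp3 c)"
    and iso: "\<And>m. m \<in> supp3 c \<Longrightarrow> k1 * of_nat (fst m) + k2 * of_nat (fst (snd m)) + k3 * of_nat (snd (snd m)) = W"
  shows "k1 * x * ev3 (D1 c) x y u + k2 * y * ev3 (D2 c) x y u + k3 * u * ev3 (D3 c) x y u = W * ev3 c x y u"
proof -
  have "k1 * x * ev3 (D1 c) x y u + k2 * y * ev3 (D2 c) x y u + k3 * u * ev3 (D3 c) x y u
     = (\<Sum>m\<in>supp3 c. c m * mon3 m x y u * (k1 * of_nat (fst m) + k2 * of_nat (fst (snd m)) + k3 * of_nat (snd (snd m))))"
    unfolding ev3_D1[OF fin] ev3_D2[OF fin] ev3_D3[OF fin] sum_distrib_left sum.distrib[symmetric]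
  proof (rule sum.cong[OF refl])
    fix m :: "nat \<times> nat \<times> nat"
    have a: "x * (of_nat (fst m) * x ^ (fst m - 1)) = of_nat (fst m) * x ^ fst m" by (rule xpow)
    have b: "y * (of_nat (fst (snd m)) * y ^ (fst (snd m) - 1)) = of_nat (fst (snd m)) * y ^ fst (snd m)" by (rule xpow)
    have c: "u * (of_nat (snd (snd m)) * u ^ (snd (snd m) - 1)) = of_nat (snd (snd m)) * u ^ snd (snd m)" by (rule xpow)
    show "k1 * x * (c m * (of_nat (fst m) * x ^ (fst m - 1) * y ^ fst (snd m) * u ^ snd (snd m))) +
         k2 * y * (c m * (of_nat (fst (snd m)) * x ^ fst m * y ^ (fst (snd m) - 1) * u ^ snd (snd m))) +
         k3 * u * (c m * (of_nat (snd (snd m)) * x ^ fst m * y ^ fst (snd m) * u ^ (snd (snd m) - 1))) =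
         c m * mon3 m x y u * (k1 * of_nat (fst m) + k2 * of_nat (fst (snd m)) + k3 * of_nat (snd (snd m)))"
      unfolding mon3_def by (rule gen_euler) (rule xpow)+
  qed
  also have "\<dots> = (\<Sum>m\<in>supp3 c. c m * mon3 m x y u * W)"
    by (rule sum.cong[OF refl]) (simp add: iso)
  also have "\<dots> = W * ev3 c x y u" by (simp add: ev3_def sum_distrib_left mult_ac)
  finally show ?thesis .
qed

lemma zero_deriv_slice1:
  assumes "open V" "(a,b) \<in> V" "\<And>x y. (x,y) \<in> V \<Longrightarrow> g x y = 0"
    and "((\<lambda>w. g w b) has_field_derivative D) (at a)"
  shows "D = 0"
proof -
  have o: "open ((\<lambda>w. (w,b)) -` V)" by (rule continuous_open_vimage[OF assms(1)]) (intro continuous_intros)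
  have "((\<lambda>w. 0) has_field_derivative D) (at a)"
    by (rule has_field_derivative_transform_within_open[OF assms(4) o]) (use assms in auto)
  then show ?thesis using DERIV_const DERIV_unique by blast
qed

lemma zero_deriv_slice2:
  assumes "open V" "(a,b) \<in> V" "\<And>x y. (x,y) \<in> V \<Longrightarrow> g x y = 0"
    and "((\<lambda>w. g a w) has_field_derivative D) (at b)"
  shows "D = 0"
proof -
  have o: "open ((\<lambda>w. (a,w)) -` V)" by (rule continuous_open_vimage[OF assms(1)]) (intro continuous_intros)
  have "((\<lambda>w. 0) has_field_derivative D) (at b)"
    by (rule has_field_derivative_transform_within_open[OF assms(4) o]) (use assms in auto)
  then show ?thesis using DERIV_const DERIV_unique by blast
qed

lemma TF_zero_dF:
  assumes o: "open V" and d1: "\<And>a b. (a,b) \<in> V \<Longrightarrow> pd1 F a b = 0" and d2: "\<And>a b. (a,b) \<in> V \<Longrightarrow> pd2 F a b = 0"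
    and ab: "(a,b) \<in> V"
  shows "TF f1 f2 F a b = 0"
proof -
  have p12: "pd1 (pd2 F) x y = 0" if "(x,y) \<in> V" for x y using zero_pd1[OF o d2 that] .
  have p11: "pd1 (pd1 F) x y = 0" if "(x,y) \<in> V" for x y using zero_pd1[OF o d1 that] .
  have L: "LambdaF F x y = 0" if "(x,y) \<in> V" for x y using that by (simp add: LambdaF_def p12 d1)
  have P: "PiF f1 f2 F x y = 0" if "(x,y) \<in> V" for x y using that by (simp add: PiF_def PiOp_def pd_def p11 d1)
  show ?thesis
    by (simp add: TF_def bracket1_def pd_def d1[OF ab] d2[OF ab] zero_pd1[OF o L ab] zero_pd2[OF o L ab]
        zero_pd1[OF o P ab] zero_pd2[OF o P ab])
qed

lemma TF_zero_F:
  assumes o: "open V" and z: "\<And>a b. (a,b) \<in> V \<Longrightarrow> F a b = 0" and ab: "(a,b) \<in> V"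
  shows "TF f1 f2 F a b = 0"
  by (simp add: TF_def bracket1_def pd_def z[OF ab] zero_pd1[OF o z ab] zero_pd2[OF o z ab])

lemma TF_zero_Pi:
  assumes o: "open V" and z: "\<And>a b. (a,b) \<in> V \<Longrightarrow> PiF f1 f2 F a b = 0" and ab: "(a,b) \<in> V"
  shows "TF f1 f2 F a b = 0"
  by (simp add: TF_def bracket1_def pd_def z[OF ab] zero_pd1[OF o z ab] zero_pd2[OF o z ab])

lemma cramer:
  fixes P1 P2 P3 F1 L1 Q1 F2 L2 Q2 X L Q k f1 f2 g1 h1 g2 h2 :: complex
  assumes e1: "P1*F1 + P2*L1 + P3*Q1 = 0" and e2: "P1*F2 + P2*L2 + P3*Q2 = 0"
    and u1: "f1*X*P1 + g1*L*P2 + h1*Q*P3 = 0" and u2: "f2*X*P1 + g2*L*P2 + h2*Q*P3 = 0"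
  shows "P2 * ((k*(g1*L*F1 - f1*X*L1)) * (k*(h2*Q*F2 - f2*X*Q2)) - (k*(g2*L*F2 - f2*X*L2)) * (k*(h1*Q*F1 - f1*X*Q1))) = 0"
    and "P3 * ((k*(g1*L*F1 - f1*X*L1)) * (k*(h2*Q*F2 - f2*X*Q2)) - (k*(g2*L*F2 - f2*X*L2)) * (k*(h1*Q*F1 - f1*X*Q1))) = 0"
proof -
  define B12 where "B12 = k*(g1*L*F1 - f1*X*L1)"
  define B13 where "B13 = k*(h1*Q*F1 - f1*X*Q1)"
  define B22 where "B22 = k*(g2*L*F2 - f2*X*L2)"
  define B23 where "B23 = k*(h2*Q*F2 - f2*X*Q2)"
  have r1: "P2*B12 + P3*B13 = k*(F1*(f1*X*P1 + g1*L*P2 + h1*Q*P3) - f1*X*(P1*F1 + P2*L1 + P3*Q1))"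
    unfolding B12_def B13_def by (simp add: algebra_simps)
  have r2: "P2*B22 + P3*B23 = k*(F2*(f2*X*P1 + g2*L*P2 + h2*Q*P3) - f2*X*(P1*F2 + P2*L2 + P3*Q2))"
    unfolding B22_def B23_def by (simp add: algebra_simps)
  have z1: "P2*B12 + P3*B13 = 0" using r1 e1 u1 by simp
  have z2: "P2*B22 + P3*B23 = 0" using r2 e2 u2 by simp
  have "P2 * (B12*B23 - B22*B13) = B23*(P2*B12 + P3*B13) - B13*(P2*B22 + P3*B23)" by (simp add: algebra_simps)
  then show "P2 * ((k*(g1*L*F1 - f1*X*L1)) * (k*(h2*Q*F2 - f2*X*Q2)) - (k*(g2*L*F2 - f2*X*L2)) * (k*(h1*Q*F1 - f1*X*Q1))) = 0"
    using z1 z2 unfolding B12_def B13_def B22_def B23_def by simp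
  have "P3 * (B12*B23 - B22*B13) = B12*(P2*B22 + P3*B23) - B22*(P2*B12 + P3*B13)" by (simp add: algebra_simps)
  then show "P3 * ((k*(g1*L*F1 - f1*X*L1)) * (k*(h2*Q*F2 - f2*X*Q2)) - (k*(g2*L*F2 - f2*X*L2)) * (k*(h1*Q*F1 - f1*X*Q1))) = 0"
    using z1 z2 unfolding B12_def B13_def B22_def B23_def by simp
qed

lemma ev3_zero: "ev3 (\<lambda>_. 0) x y u = 0" by (simp add: ev3_def supp3_def)

lemma ev3_const: assumes "\<And>m. m \<noteq> (0,0,0) \<Longrightarrow> c m = 0" shows "ev3 c x y u = c (0,0,0)"
proof -
  have "ev3 c x y u = (\<Sum>m\<in>{(0,0,0)}. c m * mon3 m x y u)"
    by (rule ev3_sub) (use assms in \<open>auto simp: supp3_def\<close>)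
  then show ?thesis by (simp add: mon3_def)
qed

lemma D_zero:
  "D1 c = (\<lambda>_. 0) \<Longrightarrow> c (Suc a, b, e) = 0"
  "D2 c = (\<lambda>_. 0) \<Longrightarrow> c (a, Suc b, e) = 0"
  "D3 c = (\<lambda>_. 0) \<Longrightarrow> c (a, b, Suc e) = 0"
proof -
  assume "D1 c = (\<lambda>_. 0)"
  then have "D1 c (a,b,e) = 0" by simp
  then show "c (Suc a, b, e) = 0" by (simp add: D1_def sh1_def del: of_nat_Suc)
next
  assume "D2 c = (\<lambda>_. 0)"
  then have "D2 c (a,b,e) = 0" by simp
  then show "c (a, Suc b, e) = 0" by (simp add: D2_def sh2_def del: of_nat_Suc)
next
  assume "D3 c = (\<lambda>_. 0)"
  then have "D3 c (a,b,e) = 0" by simp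
  then show "c (a, b, Suc e) = 0" by (simp add: D3_def sh3_def del: of_nat_Suc)
qed

locale core =
  fixes F :: "complex \<Rightarrow> complex \<Rightarrow> complex" and f1 f2 :: int and V0 :: "(complex \<times> complex) set"
  assumes shF: "sh F" and oV0: "open V0" and V0H: "V0 \<subseteq> upper_half \<times> upper_half"
    and TFnz: "\<And>a b. (a,b) \<in> V0 \<Longrightarrow> TF f1 f2 F a b \<noteq> 0"
begin

definition E :: "p3 \<Rightarrow> complex \<Rightarrow> complex \<Rightarrow> complex" where
  "E c a b = ev3 c (F a b) (LambdaF F a b) (PiF f1 f2 F a b)"

definition iso :: "p3 \<Rightarrow> bool" where
  "iso c \<longleftrightarrow> (\<exists>W1 W2. \<forall>m\<in>supp3 c.
     of_int f1 * of_nat (fst m) + of_int (2*f1+2) * of_nat (fst (snd m)) + of_int (4*f1+4) * of_nat (snd (snd m)) = (W1::complex) \<and>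
     of_int f2 * of_nat (fst m) + of_int (2*f2+2) * of_nat (fst (snd m)) + of_int (4*f2+4) * of_nat (snd (snd m)) = (W2::complex))"

definition vanish :: "p3 \<Rightarrow> bool" where
  "vanish c \<longleftrightarrow> (\<exists>V. open V \<and> V \<noteq> {} \<and> V \<subseteq> V0 \<and> (\<forall>a b. (a,b) \<in> V \<longrightarrow> E c a b = 0))"

lemma iso_D: assumes "iso c" shows "iso (D1 c)" "iso (D2 c)" "iso (D3 c)"
proof -
  obtain W1 W2 where W: "\<And>m. m \<in> supp3 c \<Longrightarrow>
     of_int f1 * of_nat (fst m) + of_int (2*f1+2) * of_nat (fst (snd m)) + of_int (4*f1+4) * of_nat (snd (snd m)) = (W1::complex) \<and>
     of_int f2 * of_nat (fst m) + of_int (2*f2+2) * of_nat (fst (snd m)) + of_int (4*f2+4) * of_nat (snd (snd m)) = (W2::complex)"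
    using assms unfolding iso_def by blast
  show "iso (D1 c)" unfolding iso_def
  proof (intro exI ballI)
    fix m assume "m \<in> supp3 (D1 c)"
    then have "sh1 m \<in> supp3 c" using supp_D by blast
    from W[OF this] show "of_int f1 * of_nat (fst m) + of_int (2*f1+2) * of_nat (fst (snd m)) + of_int (4*f1+4) * of_nat (snd (snd m)) = W1 - of_int f1 \<and>
     of_int f2 * of_nat (fst m) + of_int (2*f2+2) * of_nat (fst (snd m)) + of_int (4*f2+4) * of_nat (snd (snd m)) = W2 - of_int f2"
      by (auto simp: sh1_def algebra_simps)
  qed
  show "iso (D2 c)" unfolding iso_def
  proof (intro exI ballI)
    fix m assume "m \<in> supp3 (D2 c)"
    then have "sh2 m \<in> supp3 c" using supp_D by blast
    from W[OF this] show "of_int f1 * of_nat (fst m) + of_int (2*f1+2) * of_nat (fst (snd m)) + of_int (4*f1+4) * of_nat (snd (snd m)) = W1 - of_int (2*f1+2) \<and>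
     of_int f2 * of_nat (fst m) + of_int (2*f2+2) * of_nat (fst (snd m)) + of_int (4*f2+4) * of_nat (snd (snd m)) = W2 - of_int (2*f2+2)"
      by (auto simp: sh2_def algebra_simps)
  qed
  show "iso (D3 c)" unfolding iso_def
  proof (intro exI ballI)
    fix m assume "m \<in> supp3 (D3 c)"
    then have "sh3 m \<in> supp3 c" using supp_D by blast
    from W[OF this] show "of_int f1 * of_nat (fst m) + of_int (2*f1+2) * of_nat (fst (snd m)) + of_int (4*f1+4) * of_nat (snd (snd m)) = W1 - of_int (4*f1+4) \<and>
     of_int f2 * of_nat (fst m) + of_int (2*f2+2) * of_nat (fst (snd m)) + of_int (4*f2+4) * of_nat (snd (snd m)) = W2 - of_int (4*f2+4)"
      by (auto simp: sh3_def algebra_simps)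
  qed
qed

lemma deg_D: assumes "\<forall>m\<in>supp3 c. fst m + fst (snd m) + snd (snd m) \<le> Suc d"
  shows "\<forall>m\<in>supp3 (D1 c). fst m + fst (snd m) + snd (snd m) \<le> d"
    "\<forall>m\<in>supp3 (D2 c). fst m + fst (snd m) + snd (snd m) \<le> d"
    "\<forall>m\<in>supp3 (D3 c). fst m + fst (snd m) + snd (snd m) \<le> d"
proof -
  show "\<forall>m\<in>supp3 (D1 c). fst m + fst (snd m) + snd (snd m) \<le> d"
  proof
    fix m assume "m \<in> supp3 (D1 c)"
    then have "sh1 m \<in> supp3 c" using supp_D by blast
    then show "fst m + fst (snd m) + snd (snd m) \<le> d" using assms by (auto simp: sh1_def)
  qed
  show "\<forall>m\<in>supp3 (D2 c). fst m + fst (snd m) + snd (snd m) \<le> d"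
  proof
    fix m assume "m \<in> supp3 (D2 c)"
    then have "sh2 m \<in> supp3 c" using supp_D by blast
    then show "fst m + fst (snd m) + snd (snd m) \<le> d" using assms by (auto simp: sh2_def)
  qed
  show "\<forall>m\<in>supp3 (D3 c). fst m + fst (snd m) + snd (snd m) \<le> d"
  proof
    fix m assume "m \<in> supp3 (D3 c)"
    then have "sh3 m \<in> supp3 c" using supp_D by blast
    then show "fst m + fst (snd m) + snd (snd m) \<le> d" using assms by (auto simp: sh3_def)
  qed
qed

lemma H_of: assumes "(a,b) \<in> V" "V \<subseteq> V0" shows "a \<in> upper_half" "b \<in> upper_half"
  using assms V0H by auto

lemma eqs:
  assumes fin: "finite (supp3 c)" and oV: "open V" and VV: "V \<subseteq> V0" and Z: "\<And>a b. (a,b) \<in> V \<Longrightarrow> E c a b = 0"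
    and ab: "(a,b) \<in> V"
  shows "ev3 (D1 c) (F a b) (LambdaF F a b) (PiF f1 f2 F a b) * pd1 F a b
       + ev3 (D2 c) (F a b) (LambdaF F a b) (PiF f1 f2 F a b) * pd1 (LambdaF F) a b
       + ev3 (D3 c) (F a b) (LambdaF F a b) (PiF f1 f2 F a b) * pd1 (PiF f1 f2 F) a b = 0"
    and "ev3 (D1 c) (F a b) (LambdaF F a b) (PiF f1 f2 F a b) * pd2 F a b
       + ev3 (D2 c) (F a b) (LambdaF F a b) (PiF f1 f2 F a b) * pd2 (LambdaF F) a b
       + ev3 (D3 c) (F a b) (LambdaF F a b) (PiF f1 f2 F a b) * pd2 (PiF f1 f2 F) a b = 0"
proof -
  have a: "a \<in> upper_half" and b: "b \<in> upper_half" using H_of[OF ab VV] by auto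
  have d1: "((\<lambda>w. E c w b) has_field_derivative
     ev3 (D1 c) (F a b) (LambdaF F a b) (PiF f1 f2 F a b) * pd1 F a b
       + ev3 (D2 c) (F a b) (LambdaF F a b) (PiF f1 f2 F a b) * pd1 (LambdaF F) a b
       + ev3 (D3 c) (F a b) (LambdaF F a b) (PiF f1 f2 F a b) * pd1 (PiF f1 f2 F) a b) (at a)"
    unfolding E_def
    by (rule ev3_deriv[OF fin sh_deriv1[OF shF a b] sh_deriv1[OF sh_LambdaF[OF shF] a b] sh_deriv1[OF sh_PiF[OF shF] a b]])
  show "ev3 (D1 c) (F a b) (LambdaF F a b) (PiF f1 f2 F a b) * pd1 F a b
       + ev3 (D2 c) (F a b) (LambdaF F a b) (PiF f1 f2 F a b) * pd1 (LambdaF F) a b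
       + ev3 (D3 c) (F a b) (LambdaF F a b) (PiF f1 f2 F a b) * pd1 (PiF f1 f2 F) a b = 0"
    using zero_deriv_slice1[where g="E c", OF oV ab Z d1] by simp
  have d2: "((\<lambda>w. E c a w) has_field_derivative
     ev3 (D1 c) (F a b) (LambdaF F a b) (PiF f1 f2 F a b) * pd2 F a b
       + ev3 (D2 c) (F a b) (LambdaF F a b) (PiF f1 f2 F a b) * pd2 (LambdaF F) a b
       + ev3 (D3 c) (F a b) (LambdaF F a b) (PiF f1 f2 F a b) * pd2 (PiF f1 f2 F) a b) (at b)"
    unfolding E_def
    by (rule ev3_deriv[OF fin sh_deriv2[OF shF a b] sh_deriv2[OF sh_LambdaF[OF shF] a b] sh_deriv2[OF sh_PiF[OF shF] a b]])
  show "ev3 (D1 c) (F a b) (LambdaF F a b) (PiF f1 f2 F a b) * pd2 F a b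
       + ev3 (D2 c) (F a b) (LambdaF F a b) (PiF f1 f2 F a b) * pd2 (LambdaF F) a b
       + ev3 (D3 c) (F a b) (LambdaF F a b) (PiF f1 f2 F a b) * pd2 (PiF f1 f2 F) a b = 0"
    using zero_deriv_slice2[where g="E c", OF oV ab Z d2] by simp
qed

lemma eul:
  assumes fin: "finite (supp3 c)" and isoc: "iso c" and Z: "E c a b = 0"
  shows "of_int f1 * F a b * ev3 (D1 c) (F a b) (LambdaF F a b) (PiF f1 f2 F a b)
       + of_int (2*f1+2) * LambdaF F a b * ev3 (D2 c) (F a b) (LambdaF F a b) (PiF f1 f2 F a b)
       + of_int (4*f1+4) * PiF f1 f2 F a b * ev3 (D3 c) (F a b) (LambdaF F a b) (PiF f1 f2 F a b) = 0"
    and "of_int f2 * F a b * ev3 (D1 c) (F a b) (LambdaF F a b) (PiF f1 f2 F a b)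
       + of_int (2*f2+2) * LambdaF F a b * ev3 (D2 c) (F a b) (LambdaF F a b) (PiF f1 f2 F a b)
       + of_int (4*f2+4) * PiF f1 f2 F a b * ev3 (D3 c) (F a b) (LambdaF F a b) (PiF f1 f2 F a b) = 0"
proof -
  obtain W1 W2 where W: "\<And>m. m \<in> supp3 c \<Longrightarrow>
     of_int f1 * of_nat (fst m) + of_int (2*f1+2) * of_nat (fst (snd m)) + of_int (4*f1+4) * of_nat (snd (snd m)) = (W1::complex) \<and>
     of_int f2 * of_nat (fst m) + of_int (2*f2+2) * of_nat (fst (snd m)) + of_int (4*f2+4) * of_nat (snd (snd m)) = (W2::complex)"
    using isoc unfolding iso_def by blast
  have Z': "ev3 c (F a b) (LambdaF F a b) (PiF f1 f2 F a b) = 0" using Z by (simp add: E_def)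
  show "of_int f1 * F a b * ev3 (D1 c) (F a b) (LambdaF F a b) (PiF f1 f2 F a b)
       + of_int (2*f1+2) * LambdaF F a b * ev3 (D2 c) (F a b) (LambdaF F a b) (PiF f1 f2 F a b)
       + of_int (4*f1+4) * PiF f1 f2 F a b * ev3 (D3 c) (F a b) (LambdaF F a b) (PiF f1 f2 F a b) = 0"
    using euler3[OF fin, of "of_int f1" "of_int (2*f1+2)" "of_int (4*f1+4)" W1] W Z' by auto
  show "of_int f2 * F a b * ev3 (D1 c) (F a b) (LambdaF F a b) (PiF f1 f2 F a b)
       + of_int (2*f2+2) * LambdaF F a b * ev3 (D2 c) (F a b) (LambdaF F a b) (PiF f1 f2 F a b)
       + of_int (4*f2+4) * PiF f1 f2 F a b * ev3 (D3 c) (F a b) (LambdaF F a b) (PiF f1 f2 F a b) = 0"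
    using euler3[OF fin, of "of_int f2" "of_int (2*f2+2)" "of_int (4*f2+4)" W2] W Z' by auto
qed

lemma TFmul:
  assumes fin: "finite (supp3 c)" and isoc: "iso c" and oV: "open V" and VV: "V \<subseteq> V0"
    and Z: "\<And>a b. (a,b) \<in> V \<Longrightarrow> E c a b = 0" and ab: "(a,b) \<in> V"
  shows "E (D2 c) a b = 0" "E (D3 c) a b = 0"
proof -
  note e = eqs[OF fin oV VV Z ab]
  note u = eul[OF fin isoc Z[OF ab]]
  have T: "TF f1 f2 F a b \<noteq> 0" using TFnz ab VV by auto
  have "E (D2 c) a b * TF f1 f2 F a b = 0"
    unfolding E_def TF_def bracket1_def pd_1 pd_2
    by (rule cramer(1)[OF e u])
  then show "E (D2 c) a b = 0" using T by simp
  have "E (D3 c) a b * TF f1 f2 F a b = 0"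
    unfolding E_def TF_def bracket1_def pd_1 pd_2
    by (rule cramer(2)[OF e u])
  then show "E (D3 c) a b = 0" using T by simp
qed

end

context core begin

lemma E_zero: "E (\<lambda>_. 0) a b = 0" by (simp add: E_def ev3_zero)

lemma main_ind:
  "finite (supp3 c) \<Longrightarrow> (\<forall>m\<in>supp3 c. fst m + fst (snd m) + snd (snd m) \<le> d) \<Longrightarrow> iso c \<Longrightarrow> vanish c \<Longrightarrow> c = (\<lambda>_. 0)"
proof (induction d arbitrary: c)
  case 0
  obtain V where V: "open V" "V \<noteq> {}" "V \<subseteq> V0" "\<And>a b. (a,b) \<in> V \<Longrightarrow> E c a b = 0"
    using 0(4) unfolding vanish_def by blast
  obtain a b where ab: "(a,b) \<in> V" using V(2) by auto
  have c0: "c m = 0" if "m \<noteq> (0,0,0)" for m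
  proof (rule ccontr)
    assume "c m \<noteq> 0"
    then have "m \<in> supp3 c" by (simp add: supp3_def)
    then show False using 0(2) that by (auto simp: prod_eq_iff)
  qed
  have "E c a b = c (0,0,0)" unfolding E_def by (rule ev3_const[OF c0])
  then have "c (0,0,0) = 0" using V(4)[OF ab] by simp
  then have "c m = 0" for m using c0 by (cases "m = (0,0,0)") auto
  then show ?case by (simp add: fun_eq_iff)
next
  case (Suc d)
  note fin = Suc.prems(1) and deg = Suc.prems(2) and isoc = Suc.prems(3)
  obtain V where V: "open V" "V \<noteq> {}" "V \<subseteq> V0" "\<And>a b. (a,b) \<in> V \<Longrightarrow> E c a b = 0"
    using Suc.prems(4) unfolding vanish_def by blast
  have VH: "V \<subseteq> upper_half \<times> upper_half" using V(3) V0H by auto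
  have D2z: "D2 c = (\<lambda>_. 0)"
  proof (rule Suc.IH[OF fin_D(2)[OF fin] deg_D(2)[OF deg] iso_D(2)[OF isoc]])
    show "vanish (D2 c)" unfolding vanish_def using V TFmul(1)[OF fin isoc V(1) V(3) V(4)] by blast
  qed
  have D3z: "D3 c = (\<lambda>_. 0)"
  proof (rule Suc.IH[OF fin_D(3)[OF fin] deg_D(3)[OF deg] iso_D(3)[OF isoc]])
    show "vanish (D3 c)" unfolding vanish_def using V TFmul(2)[OF fin isoc V(1) V(3) V(4)] by blast
  qed
  have D1z: "D1 c = (\<lambda>_. 0)"
  proof (cases "\<exists>a b. (a,b) \<in> V \<and> (pd1 F a b \<noteq> 0 \<or> pd2 F a b \<noteq> 0)")
    case False
    then have "\<And>a b. (a,b) \<in> V \<Longrightarrow> pd1 F a b = 0" "\<And>a b. (a,b) \<in> V \<Longrightarrow> pd2 F a b = 0" by auto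
    moreover obtain a b where ab: "(a,b) \<in> V" using V(2) by auto
    ultimately have "TF f1 f2 F a b = 0" using TF_zero_dF[OF V(1)] by blast
    moreover have "TF f1 f2 F a b \<noteq> 0" using TFnz ab V(3) by auto
    ultimately show ?thesis by simp
  next
    case True
    then obtain a0 b0 where ab0: "(a0,b0) \<in> V" and nz0: "pd1 F a0 b0 \<noteq> 0 \<or> pd2 F a0 b0 \<noteq> 0"
      by blast
    define i :: nat where "i = (if pd1 F a0 b0 \<noteq> 0 then 1 else 2)"
    have i: "i = 1 \<or> i = 2" unfolding i_def by simp
    have nz: "pd i F a0 b0 \<noteq> 0" using nz0 unfolding i_def pd_def by auto
    have cont: "continuous_on (upper_half \<times> upper_half) (\<lambda>(a,b). pd i F a b)"
      by (rule sh_cont[OF sh_pd[OF shF]])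
    define V' where "V' = V \<inter> ((upper_half \<times> upper_half) \<inter> (\<lambda>(a,b). pd i F a b) -` (- {0}))"
    have oV': "open V'" unfolding V'_def
      by (intro open_Int V(1) continuous_open_preimage[OF cont]) (auto simp: open_Times open_H)
    have V'ne: "V' \<noteq> {}" using ab0 nz VH unfolding V'_def by auto
    have V'V: "V' \<subseteq> V" unfolding V'_def by auto
    have "vanish (D1 c)" unfolding vanish_def
    proof (intro exI conjI allI impI)
      show "open V'" "V' \<noteq> {}" "V' \<subseteq> V0" using oV' V'ne V'V V(3) by auto
      fix a b assume ab: "(a,b) \<in> V'"
      then have abV: "(a,b) \<in> V" using V'V by auto
      have nzi: "pd i F a b \<noteq> 0" using ab unfolding V'_def by auto
      note e = eqs[OF fin V(1) V(3) V(4) abV]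
      have E2: "ev3 (D2 c) (F a b) (LambdaF F a b) (PiF f1 f2 F a b) = 0" by (simp add: D2z ev3_zero)
      have E3: "ev3 (D3 c) (F a b) (LambdaF F a b) (PiF f1 f2 F a b) = 0" by (simp add: D3z ev3_zero)
      have "E (D1 c) a b * pd i F a b = 0"
        using i e E2 E3 unfolding E_def pd_def by auto
      then show "E (D1 c) a b = 0" using nzi by simp
    qed
    then show ?thesis by (rule Suc.IH[OF fin_D(1)[OF fin] deg_D(1)[OF deg] iso_D(1)[OF isoc]])
  qed
  have c0: "c m = 0" if "m \<noteq> (0,0,0)" for m
  proof -
    obtain x y z where m: "m = (x,y,z)" by (cases m) auto
    show ?thesis
    proof (cases x)
      case (Suc k) then show ?thesis using D_zero(1)[OF D1z] m by simp
    next
      case 0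
      show ?thesis
      proof (cases y)
        case (Suc k) then show ?thesis using D_zero(2)[OF D2z] m by simp
      next
        case y0: 0
        show ?thesis
        proof (cases z)
          case (Suc k) then show ?thesis using D_zero(3)[OF D3z] m by simp
        next
          case 0 then show ?thesis using that m \<open>x = 0\<close> y0 by simp
        qed
      qed
    qed
  qed
  obtain a b where ab: "(a,b) \<in> V" using V(2) by auto
  have "E c a b = c (0,0,0)" unfolding E_def by (rule ev3_const[OF c0])
  then have "c (0,0,0) = 0" using V(4)[OF ab] by simp
  then have "c m = 0" for m using c0 by (cases "m = (0,0,0)") auto
  then show ?case by (simp add: fun_eq_iff)
qed

lemma main:
  assumes "finite (supp3 c)" "iso c" "vanish c" shows "c = (\<lambda>_. 0)"
proof -
  define d where "d = Max ((\<lambda>m. fst m + fst (snd m) + snd (snd m)) ` supp3 c)"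
  have "\<forall>m\<in>supp3 c. fst m + fst (snd m) + snd (snd m) \<le> d"
    unfolding d_def using assms(1) by auto
  then show ?thesis using main_ind assms by blast
qed

end

lemma hmf_sh: "hilbert_modular_form d f1 f2 F \<Longrightarrow> sh F"
  unfolding hilbert_modular_form_def sh_def by blast

lemma emb_10: "emb1 d (1,0) = 1" "emb2 d (1,0) = 1" "emb1 d (0,0) = 0" "emb2 d (0,0) = 0"
  by (simp_all add: emb1_def emb2_def)

lemma hmf_trans: assumes "hilbert_modular_form d f1 f2 F"
  shows "transl F f1 f2 (emb1 d x) (emb2 d x)"
proof
  show "sh F" by (rule hmf_sh[OF assms])
  fix z1 z2 assume z: "z1 \<in> upper_half" "z2 \<in> upper_half"
  have mem: "((1,0), (0,0), x, (1,0)) \<in> SL2_OK d" by (simp add: SL2_OK_def emb_10)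
  have "\<forall>(a, b, c, e)\<in>SL2_OK d. \<forall>z1\<in>upper_half. \<forall>z2\<in>upper_half.
        F (mob (emb1 d a) (emb1 d b) (emb1 d c) (emb1 d e) z1)
          (mob (emb2 d a) (emb2 d b) (emb2 d c) (emb2 d e) z2)
        = (of_real (emb1 d c) * z1 + of_real (emb1 d e)) powi f1
          * (of_real (emb2 d c) * z2 + of_real (emb2 d e)) powi f2 * F z1 z2"
    using assms unfolding hilbert_modular_form_def by blast
  from bspec[OF this mem] z show "F (mm (emb1 d x) z1) (mm (emb2 d x) z2) = jj (emb1 d x) z1 powi f1 * jj (emb2 d x) z2 powi f2 * F z1 z2"
    by (simp add: mob_def mm_def jj_def emb_10)
qed

lemma omega_ne: assumes "d > 1" shows "omega1 d \<noteq> omega2 d"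
proof -
  have "sqrt (real_of_int d) > 0" using assms by simp
  then show ?thesis by (auto simp: omega1_def omega2_def)
qed

lemma len3: "length xs = 3 \<Longrightarrow> xs = [xs!0, xs!1, xs!2]"
  by (cases xs; cases "tl xs"; cases "tl (tl xs)") (auto simp: numeral_3_eq_3)

lemma len4: "length xs = 4 \<Longrightarrow> xs = [xs!0, xs!1, xs!2, xs!3]"
  by (cases xs; cases "tl xs"; cases "tl (tl xs)"; cases "tl (tl (tl xs))") (auto simp: numeral_Bit0)

lemma conv3:
  assumes len: "\<And>\<alpha>. c \<alpha> \<noteq> 0 \<Longrightarrow> length \<alpha> = 3"
  shows "poly_eval c [g0,g1,g2] a b = ev3 (\<lambda>m. c [fst m, fst (snd m), snd (snd m)]) (g0 a b) (g1 a b) (g2 a b)"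
  unfolding poly_eval_def ev3_def
proof (rule sum.reindex_bij_witness[where i="\<lambda>m. [fst m, fst (snd m), snd (snd m)]" and j="\<lambda>\<alpha>. (\<alpha>!0, \<alpha>!1, \<alpha>!2)"])
  fix \<alpha> assume "\<alpha> \<in> {\<alpha>. c \<alpha> \<noteq> 0}"
  then have l: "\<alpha> = [\<alpha>!0, \<alpha>!1, \<alpha>!2]" using len len3 by auto
  show "[fst (\<alpha>!0, \<alpha>!1, \<alpha>!2), fst (snd (\<alpha>!0, \<alpha>!1, \<alpha>!2)), snd (snd (\<alpha>!0, \<alpha>!1, \<alpha>!2))] = \<alpha>"
    using l by simp
  show "(\<alpha>!0, \<alpha>!1, \<alpha>!2) \<in> supp3 (\<lambda>m. c [fst m, fst (snd m), snd (snd m)])"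
    using l \<open>\<alpha> \<in> _\<close> by (simp add: supp3_def)
  show "c [fst (\<alpha>!0, \<alpha>!1, \<alpha>!2), fst (snd (\<alpha>!0, \<alpha>!1, \<alpha>!2)), snd (snd (\<alpha>!0, \<alpha>!1, \<alpha>!2))] *
        mon3 (\<alpha>!0, \<alpha>!1, \<alpha>!2) (g0 a b) (g1 a b) (g2 a b) = c \<alpha> * (\<Prod>i<length [g0,g1,g2]. ([g0,g1,g2] ! i) a b ^ (\<alpha> ! i))"
    using l by (simp add: mon3_def numeral_3_eq_3 numeral_2_eq_2 lessThan_Suc mult_ac)
next
  fix m assume "m \<in> supp3 (\<lambda>m. c [fst m, fst (snd m), snd (snd m)])"
  then show "([fst m, fst (snd m), snd (snd m)] ! 0, [fst m, fst (snd m), snd (snd m)] ! 1, [fst m, fst (snd m), snd (snd m)] ! 2) = m"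
    "[fst m, fst (snd m), snd (snd m)] \<in> {\<alpha>. c \<alpha> \<noteq> 0}" by (auto simp: supp3_def)
qed

lemma wsum3: "wsum wt 3 [a,b,e] = wt 0 * int a + wt 1 * int b + wt 2 * int e"
  by (simp add: wsum_def numeral_3_eq_3 lessThan_Suc numeral_2_eq_2)

lemma wsum4: "wsum wt 4 [a,b,e,g] = wt 0 * int a + wt 1 * int b + wt 2 * int e + wt 3 * int g"
  by (simp add: wsum_def eval_nat_numeral lessThan_Suc)

lemma claim2:
  assumes tr: "\<And>x. transl F f1 f2 (emb1 d x) (emb2 d x)"
    and om: "omega1 d \<noteq> omega2 d"
    and cr: "core F f1 f2 V0" and ne: "V0 \<noteq> {}"
  shows "alg_indep [F, LambdaF F, PiF f1 f2 F]"
  unfolding alg_indep_def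
proof (intro allI impI)
  interpret core F f1 f2 V0 by (rule cr)
  fix c :: "nat list \<Rightarrow> complex"
  assume fin: "finite {\<alpha>. c \<alpha> \<noteq> 0}" and len: "\<forall>\<alpha>. c \<alpha> \<noteq> 0 \<longrightarrow> length \<alpha> = length [F, LambdaF F, PiF f1 f2 F]"
    and nz: "\<exists>\<alpha>. c \<alpha> \<noteq> 0"
  show "\<exists>z1\<in>upper_half. \<exists>z2\<in>upper_half. poly_eval c [F, LambdaF F, PiF f1 f2 F] z1 z2 \<noteq> 0"
  proof (rule ccontr)
    assume "\<not> ?thesis"
    then have Z: "\<And>z1 z2. z1 \<in> upper_half \<Longrightarrow> z2 \<in> upper_half \<Longrightarrow> poly_eval c [F, LambdaF F, PiF f1 f2 F] z1 z2 = 0"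
      by blast
    obtain \<alpha>0 where a0: "c \<alpha>0 \<noteq> 0" using nz by blast
    define gs where "gs = [F, LambdaF F, PiF f1 f2 F]"
    define wt1 :: "nat \<Rightarrow> int" where "wt1 i = [f1, 2*f1+2, 4*f1+4] ! i" for i
    define wt2 :: "nat \<Rightarrow> int" where "wt2 i = [f2, 2*f2+2, 4*f2+4] ! i" for i
    define w where "w = (wsum wt1 (length gs) \<alpha>0, wsum wt2 (length gs) \<alpha>0)"
    define cw where "cw \<alpha> = (if (wsum wt1 (length gs) \<alpha>, wsum wt2 (length gs) \<alpha>) = w then c \<alpha> else 0)" for \<alpha>
    have md: "(gs ! i) (mm (emb1 d x) z1) (mm (emb2 d x) z2) = jj (emb1 d x) z1 powi wt1 i * jj (emb2 d x) z2 powi wt2 i * (gs ! i) z1 z2"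
      if "z1 \<in> upper_half" "z2 \<in> upper_half" "i < length gs" for x z1 z2 i
    proof -
      have "i = 0 \<or> i = 1 \<or> i = 2" using that(3) by (auto simp: gs_def)
      then show ?thesis
        using transl.modF[OF tr[of x] that(1,2)] transl.TLam[OF tr[of x] that(1,2)] transl.TPi[OF tr[of x] that(1,2)]
        by (auto simp: gs_def wt1_def wt2_def)
    qed
    have cwZ: "poly_eval cw gs z1 z2 = 0" if "z1 \<in> upper_half" "z2 \<in> upper_half" for z1 z2
      unfolding cw_def by (rule decomp[OF fin om md Z[folded gs_def] that]) (auto simp: gs_def)
    have lcw: "length \<alpha> = 3" if "cw \<alpha> \<noteq> 0" for \<alpha> using len that by (auto simp: cw_def split: if_splits)
    define c3 where "c3 m = cw [fst m, fst (snd m), snd (snd m)]" for m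
    have E3: "E c3 a b = poly_eval cw gs a b" for a b
      unfolding E_def c3_def gs_def by (rule conv3[symmetric]) (rule lcw)
    have fin3: "finite (supp3 c3)"
    proof (rule finite_subset[OF _ finite_imageI[OF fin, of "\<lambda>\<alpha>. (\<alpha>!0, \<alpha>!1, \<alpha>!2)"]])
      show "supp3 c3 \<subseteq> (\<lambda>\<alpha>. (\<alpha>!0, \<alpha>!1, \<alpha>!2)) ` {\<alpha>. c \<alpha> \<noteq> 0}"
      proof
        fix m assume "m \<in> supp3 c3"
        then have "cw [fst m, fst (snd m), snd (snd m)] \<noteq> 0" by (simp add: supp3_def c3_def)
        then have "c [fst m, fst (snd m), snd (snd m)] \<noteq> 0" by (simp add: cw_def split: if_splits)
        then show "m \<in> (\<lambda>\<alpha>. (\<alpha>!0, \<alpha>!1, \<alpha>!2)) ` {\<alpha>. c \<alpha> \<noteq> 0}"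
          by (intro image_eqI[where x="[fst m, fst (snd m), snd (snd m)]"]) auto
      qed
    qed
    have iso3: "iso c3" unfolding iso_def
    proof (intro exI ballI)
      fix m assume "m \<in> supp3 c3"
      then have "cw [fst m, fst (snd m), snd (snd m)] \<noteq> 0" by (simp add: supp3_def c3_def)
      then have W: "(wsum wt1 3 [fst m, fst (snd m), snd (snd m)], wsum wt2 3 [fst m, fst (snd m), snd (snd m)]) = w"
        by (simp add: cw_def gs_def numeral_3_eq_3 split: if_splits)
      then have "of_int (wsum wt1 3 [fst m, fst (snd m), snd (snd m)]) = (of_int (fst w) :: complex)"
           "of_int (wsum wt2 3 [fst m, fst (snd m), snd (snd m)]) = (of_int (snd w) :: complex)" by auto
      then show "of_int f1 * of_nat (fst m) + of_int (2*f1+2) * of_nat (fst (snd m)) + of_int (4*f1+4) * of_nat (snd (snd m)) = (of_int (fst w) :: complex) \<and>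
         of_int f2 * of_nat (fst m) + of_int (2*f2+2) * of_nat (fst (snd m)) + of_int (4*f2+4) * of_nat (snd (snd m)) = (of_int (snd w) :: complex)"
        unfolding wsum3 wt1_def wt2_def by simp
    qed
    have van: "vanish c3" unfolding vanish_def
    proof (intro exI conjI allI impI)
      show "open V0" "V0 \<noteq> {}" "V0 \<subseteq> V0" using oV0 ne by auto
      fix a b assume "(a,b) \<in> V0"
      then have "a \<in> upper_half" "b \<in> upper_half" using V0H by auto
      then show "E c3 a b = 0" by (simp add: E3 cwZ)
    qed
    have "c3 = (\<lambda>_. 0)" by (rule main[OF fin3 iso3 van])
    then have "c3 (\<alpha>0!0, \<alpha>0!1, \<alpha>0!2) = 0" by simp
    moreover have "\<alpha>0 = [\<alpha>0!0, \<alpha>0!1, \<alpha>0!2]"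
    proof (rule len3)
      show "length \<alpha>0 = 3" using len a0 by (simp add: numeral_3_eq_3)
    qed
    ultimately have "cw \<alpha>0 = 0" unfolding c3_def by simp
    then show False using a0 by (simp add: cw_def w_def)
  qed
qed

lemma f12:
  assumes tr: "\<And>x. transl F f1 f2 (emb1 d x) (emb2 d x)" and sym: "symmetric_form F"
    and cr: "core F f1 f2 V0" and ne: "V0 \<noteq> {}"
  shows "f1 = f2"
proof -
  interpret core F f1 f2 V0 by (rule cr)
  have "\<exists>a b. (a,b) \<in> V0 \<and> F a b \<noteq> 0"
  proof (rule ccontr)
    assume "\<not> ?thesis"
    then have z: "\<And>a b. (a,b) \<in> V0 \<Longrightarrow> F a b = 0" by blast
    obtain a b where ab: "(a,b) \<in> V0" using ne by auto
    have "TF f1 f2 F a b = 0" by (rule TF_zero_F[OF oV0 z ab])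
    then show False using TFnz ab by blast
  qed
  then obtain p q where pq: "(p,q) \<in> V0" "F p q \<noteq> 0" by blast
  define V1 where "V1 = V0 \<inter> ((upper_half \<times> upper_half) \<inter> (\<lambda>(a,b). F a b) -` (- {0}))"
  have oV1: "open V1" unfolding V1_def
    by (intro open_Int oV0 continuous_open_preimage[OF sh_cont[OF shF]]) (auto simp: open_Times open_H)
  have pq1: "(p,q) \<in> V1" using pq V0H unfolding V1_def by auto
  have tr1: "transl F f1 f2 1 1" using tr[of "(1,0)"] by (simp add: emb_10)
  have D0: "jj 1 a powi f1 * jj 1 b powi f2 - jj 1 b powi f1 * jj 1 a powi f2 = 0" if ab: "(a,b) \<in> V1" for a b
  proof -
    have a: "a \<in> upper_half" and b: "b \<in> upper_half" and nz: "F a b \<noteq> 0" using ab unfolding V1_def by auto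
    have e1: "F (mm 1 a) (mm 1 b) = jj 1 a powi f1 * jj 1 b powi f2 * F a b" by (rule transl.modF[OF tr1 a b])
    have e2: "F (mm 1 b) (mm 1 a) = jj 1 b powi f1 * jj 1 a powi f2 * F b a" by (rule transl.modF[OF tr1 b a])
    have s1: "F (mm 1 a) (mm 1 b) = F (mm 1 b) (mm 1 a)" using sym mm_H[OF a] mm_H[OF b] unfolding symmetric_form_def by blast
    have s2: "F b a = F a b" using sym a b unfolding symmetric_form_def by blast
    have "jj 1 a powi f1 * jj 1 b powi f2 * F a b = jj 1 b powi f1 * jj 1 a powi f2 * F a b"
      using e1 e2 s1 s2 by metis
    then have "(jj 1 a powi f1 * jj 1 b powi f2 - jj 1 b powi f1 * jj 1 a powi f2) * F a b = 0"
      by (simp only: left_diff_distrib) simp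
    then show ?thesis using nz by simp
  qed
  have p: "p \<in> upper_half" and q: "q \<in> upper_half" using pq V0H by auto
  have jp: "jj 1 p \<noteq> 0" and jq: "jj 1 q \<noteq> 0" using jj_nz[OF p] jj_nz[OF q] by auto
  have der: "((\<lambda>w. jj 1 w powi f1 * jj 1 q powi f2 - jj 1 q powi f1 * jj 1 w powi f2) has_field_derivative
       (of_int f1 * jj 1 p powi (f1 - 1) * 1 * jj 1 q powi f2 - jj 1 q powi f1 * (of_int f2 * jj 1 p powi (f2 - 1) * 1))) (at p)"
    using jp by (auto intro!: derivative_eq_intros jj_deriv)
  have d0: "of_int f1 * jj 1 p powi (f1 - 1) * 1 * jj 1 q powi f2 - jj 1 q powi f1 * (of_int f2 * jj 1 p powi (f2 - 1) * 1) = 0"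
    by (rule zero_deriv_slice1[where g="\<lambda>a b. jj 1 a powi f1 * jj 1 b powi f2 - jj 1 b powi f1 * jj 1 a powi f2", OF oV1 pq1 D0 der])
  define A where "A = jj 1 p powi f1 * jj 1 q powi f2"
  have AB: "A = jj 1 q powi f1 * jj 1 p powi f2" using D0[OF pq1] unfolding A_def by simp
  have Anz: "A \<noteq> 0" unfolding A_def using jp jq by simp
  have "jj 1 p * (of_int f1 * jj 1 p powi (f1 - 1) * 1 * jj 1 q powi f2 - jj 1 q powi f1 * (of_int f2 * jj 1 p powi (f2 - 1) * 1))
     = of_int f1 * (jj 1 p powi f1 * jj 1 q powi f2) - of_int f2 * (jj 1 q powi f1 * jj 1 p powi f2)"
    using jp by (simp add: power_int_diff field_simps)
  then have "of_int f1 * A - of_int f2 * A = 0" using d0 AB unfolding A_def by simp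
  then have "(of_int f1 - of_int f2) * A = (0::complex)" by (simp add: algebra_simps)
  then have "(of_int f1 :: complex) = of_int f2" using Anz by simp
  then show ?thesis by simp
qed

lemma claim1:
  assumes tr: "\<And>x. transl F f1 f2 (emb1 d x) (emb2 d x)"
    and om: "omega1 d \<noteq> omega2 d"
    and cr: "core F f1 f2 V0" and ne: "V0 \<noteq> {}" and f12: "f1 = f2"
  shows "alg_indep [F, LambdaF F, PiOp 1 f1 F, PiOp 2 f2 F]"
  unfolding alg_indep_def
proof (intro allI impI)
  interpret core F f1 f2 V0 by (rule cr)
  fix c :: "nat list \<Rightarrow> complex"
  assume fin: "finite {\<alpha>. c \<alpha> \<noteq> 0}" and len: "\<forall>\<alpha>. c \<alpha> \<noteq> 0 \<longrightarrow> length \<alpha> = length [F, LambdaF F, PiOp 1 f1 F, PiOp 2 f2 F]"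
    and nz: "\<exists>\<alpha>. c \<alpha> \<noteq> 0"
  show "\<exists>z1\<in>upper_half. \<exists>z2\<in>upper_half. poly_eval c [F, LambdaF F, PiOp 1 f1 F, PiOp 2 f2 F] z1 z2 \<noteq> 0"
  proof (rule ccontr)
    assume "\<not> ?thesis"
    then have Z: "\<And>z1 z2. z1 \<in> upper_half \<Longrightarrow> z2 \<in> upper_half \<Longrightarrow> poly_eval c [F, LambdaF F, PiOp 1 f1 F, PiOp 2 f2 F] z1 z2 = 0"
      by blast
    obtain \<alpha>0 where a0: "c \<alpha>0 \<noteq> 0" using nz by blast
    define gs where "gs = [F, LambdaF F, PiOp 1 f1 F, PiOp 2 f2 F]"
    have lgs: "length gs = 4" by (simp add: gs_def)
    define wt1 :: "nat \<Rightarrow> int" where "wt1 i = [f1, 2*f1+2, 2*f1+4, 2*f1] ! i" for i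
    define wt2 :: "nat \<Rightarrow> int" where "wt2 i = [f2, 2*f2+2, 2*f2, 2*f2+4] ! i" for i
    define w where "w = (wsum wt1 (length gs) \<alpha>0, wsum wt2 (length gs) \<alpha>0)"
    define cw where "cw \<alpha> = (if (wsum wt1 (length gs) \<alpha>, wsum wt2 (length gs) \<alpha>) = w then c \<alpha> else 0)" for \<alpha>
    have md: "(gs ! i) (mm (emb1 d x) z1) (mm (emb2 d x) z2) = jj (emb1 d x) z1 powi wt1 i * jj (emb2 d x) z2 powi wt2 i * (gs ! i) z1 z2"
      if "z1 \<in> upper_half" "z2 \<in> upper_half" "i < length gs" for x z1 z2 i
    proof -
      have "i = 0 \<or> i = 1 \<or> i = 2 \<or> i = 3" using that(3) by (auto simp: gs_def)
      then show ?thesis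
        using transl.modF[OF tr[of x] that(1,2)] transl.TLam[OF tr[of x] that(1,2)]
          transl.TPi1[OF tr[of x] that(1,2)] transl.TPi2[OF tr[of x] that(1,2)]
        by (auto simp: gs_def wt1_def wt2_def)
    qed
    have cwZ: "poly_eval cw gs z1 z2 = 0" if "z1 \<in> upper_half" "z2 \<in> upper_half" for z1 z2
      unfolding cw_def by (rule decomp[OF fin om md Z[folded gs_def] that]) (auto simp: gs_def)
    have lcw: "length \<alpha> = 4" if "cw \<alpha> \<noteq> 0" for \<alpha> using len that by (auto simp: cw_def split: if_splits)
    have Wcw: "wsum wt1 4 \<alpha> = fst w \<and> wsum wt2 4 \<alpha> = snd w" if "cw \<alpha> \<noteq> 0" for \<alpha>
      using that by (auto simp: cw_def lgs split: if_splits)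
    have cw0: "cw \<alpha>0 = c \<alpha>0" by (simp add: cw_def w_def)
    have diff: "wsum wt1 4 \<alpha> - wsum wt2 4 \<alpha> = 4 * (int (\<alpha>!2) - int (\<alpha>!3))" if "length \<alpha> = 4" for \<alpha>
    proof -
      have "\<alpha> = [\<alpha>!0, \<alpha>!1, \<alpha>!2, \<alpha>!3]" by (rule len4[OF that])
      then have "wsum wt1 4 \<alpha> = wsum wt1 4 [\<alpha>!0, \<alpha>!1, \<alpha>!2, \<alpha>!3]" "wsum wt2 4 \<alpha> = wsum wt2 4 [\<alpha>!0, \<alpha>!1, \<alpha>!2, \<alpha>!3]" by simp_all
      then show ?thesis unfolding wsum4 wt1_def wt2_def using f12 by (simp add: algebra_simps)
    qed
    define k :: int where "k = int (\<alpha>0!2) - int (\<alpha>0!3)"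
    have kk: "int (\<alpha>!2) - int (\<alpha>!3) = k" if "cw \<alpha> \<noteq> 0" for \<alpha>
    proof -
      have "cw \<alpha>0 \<noteq> 0" using cw0 a0 by simp
      then have "4 * (int (\<alpha>0!2) - int (\<alpha>0!3)) = fst w - snd w" using diff[OF lcw] Wcw by metis
      moreover have "4 * (int (\<alpha>!2) - int (\<alpha>!3)) = fst w - snd w" using diff[OF lcw[OF that]] Wcw[OF that] by metis
      ultimately show ?thesis unfolding k_def by simp
    qed
    define k1 where "k1 = nat k"
    define k2 where "k2 = nat (- k)"
    have k12: "k1 = 0 \<or> k2 = 0" unfolding k1_def k2_def by auto
    define ii :: "nat \<times> nat \<times> nat \<Rightarrow> nat list" where "ii m = [fst m, fst (snd m), snd (snd m) + k1, snd (snd m) + k2]" for m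
    define jf :: "nat list \<Rightarrow> nat \<times> nat \<times> nat" where "jf \<alpha> = (\<alpha>!0, \<alpha>!1, min (\<alpha>!2) (\<alpha>!3))" for \<alpha>
    define c3 where "c3 m = cw (ii m)" for m
    have ij: "ii (jf \<alpha>) = \<alpha>" if "cw \<alpha> \<noteq> 0" for \<alpha>
    proof -
      have l: "\<alpha> = [\<alpha>!0, \<alpha>!1, \<alpha>!2, \<alpha>!3]" by (rule len4[OF lcw[OF that]])
      have "int (\<alpha>!2) - int (\<alpha>!3) = k" by (rule kk[OF that])
      then have "\<alpha>!2 = min (\<alpha>!2) (\<alpha>!3) + k1 \<and> \<alpha>!3 = min (\<alpha>!2) (\<alpha>!3) + k2"
        unfolding k1_def k2_def by auto
      then show ?thesis unfolding ii_def jf_def using l by (metis fst_conv snd_conv)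
    qed
    have ji: "jf (ii m) = m" for m
      unfolding ii_def jf_def using k12 by (auto simp: prod_eq_iff)
    have conv: "poly_eval cw gs a b = PiOp 1 f1 F a b ^ k1 * PiOp 2 f2 F a b ^ k2 * ev3 c3 (F a b) (LambdaF F a b) (PiF f1 f2 F a b)" for a b
      unfolding poly_eval_def ev3_def sum_distrib_left
    proof (rule sum.reindex_bij_witness[where i=ii and j=jf])
      fix \<alpha> assume "\<alpha> \<in> {\<alpha>. cw \<alpha> \<noteq> 0}"
      then have a: "cw \<alpha> \<noteq> 0" by simp
      show "ii (jf \<alpha>) = \<alpha>" by (rule ij[OF a])
      show "jf \<alpha> \<in> supp3 c3" using a ij[OF a] by (simp add: supp3_def c3_def)
      have l: "\<alpha> = [\<alpha>!0, \<alpha>!1, \<alpha>!2, \<alpha>!3]" by (rule len4[OF lcw[OF a]])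
      have e2: "\<alpha>!2 = min (\<alpha>!2) (\<alpha>!3) + k1" and e3: "\<alpha>!3 = min (\<alpha>!2) (\<alpha>!3) + k2"
        using ij[OF a] unfolding ii_def jf_def by (metis fst_conv snd_conv nth_Cons_0 nth_Cons_Suc numeral_2_eq_2 numeral_3_eq_3)+
      have "(\<Prod>i<length gs. (gs ! i) a b ^ (\<alpha> ! i)) =
          F a b ^ (\<alpha>!0) * LambdaF F a b ^ (\<alpha>!1) * PiOp 1 f1 F a b ^ (\<alpha>!2) * PiOp 2 f2 F a b ^ (\<alpha>!3)"
        by (simp add: gs_def eval_nat_numeral lessThan_Suc mult_ac)
      also have "\<dots> = PiOp 1 f1 F a b ^ k1 * PiOp 2 f2 F a b ^ k2 * mon3 (jf \<alpha>) (F a b) (LambdaF F a b) (PiF f1 f2 F a b)"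
        unfolding mon3_def jf_def PiF_def
        by (subst e2, subst e3) (simp add: power_add power_mult_distrib mult_ac)
      finally show "PiOp 1 f1 F a b ^ k1 * PiOp 2 f2 F a b ^ k2 * (c3 (jf \<alpha>) * mon3 (jf \<alpha>) (F a b) (LambdaF F a b) (PiF f1 f2 F a b)) =
          cw \<alpha> * (\<Prod>i<length gs. (gs ! i) a b ^ (\<alpha> ! i))"
        using ij[OF a] by (simp add: c3_def mult_ac)
    next
      fix m assume "m \<in> supp3 c3"
      then show "jf (ii m) = m" "ii m \<in> {\<alpha>. cw \<alpha> \<noteq> 0}" using ji by (auto simp: supp3_def c3_def)
    qed
    define V where "V = V0 \<inter> ((upper_half \<times> upper_half) \<inter> (\<lambda>(a,b). PiF f1 f2 F a b) -` (- {0}))"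
    have oV: "open V" unfolding V_def
      by (intro open_Int oV0 continuous_open_preimage[OF sh_cont[OF sh_PiF[OF shF]]]) (auto simp: open_Times open_H)
    have Vne: "V \<noteq> {}"
    proof
      assume e: "V = {}"
      have z: "PiF f1 f2 F a b = 0" if "(a,b) \<in> V0" for a b
        using e that V0H unfolding V_def by auto
      obtain a b where ab: "(a,b) \<in> V0" using ne by auto
      have "TF f1 f2 F a b = 0" by (rule TF_zero_Pi[OF oV0 z ab])
      then show False using TFnz ab by blast
    qed
    have van: "vanish c3" unfolding vanish_def
    proof (intro exI conjI allI impI)
      show "open V" "V \<noteq> {}" "V \<subseteq> V0" using oV Vne by (auto simp: V_def)
      fix a b assume ab: "(a,b) \<in> V"
      then have a: "a \<in> upper_half" "b \<in> upper_half" and pnz: "PiF f1 f2 F a b \<noteq> 0" unfolding V_def by auto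
      then have "PiOp 1 f1 F a b \<noteq> 0" "PiOp 2 f2 F a b \<noteq> 0" by (auto simp: PiF_def)
      moreover have "PiOp 1 f1 F a b ^ k1 * PiOp 2 f2 F a b ^ k2 * E c3 a b = 0"
        using cwZ[OF a] conv[of a b] by (simp add: E_def)
      ultimately show "E c3 a b = 0" by simp
    qed
    have fin3: "finite (supp3 c3)"
    proof (rule finite_subset[OF _ finite_imageI[OF fin, of jf]])
      show "supp3 c3 \<subseteq> jf ` {\<alpha>. c \<alpha> \<noteq> 0}"
      proof
        fix m assume "m \<in> supp3 c3"
        then have "cw (ii m) \<noteq> 0" by (simp add: supp3_def c3_def)
        then have "c (ii m) \<noteq> 0" by (simp add: cw_def split: if_splits)
        then show "m \<in> jf ` {\<alpha>. c \<alpha> \<noteq> 0}" using ji[of m] by (intro image_eqI[where x="ii m"]) auto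
      qed
    qed
    have iso3: "iso c3" unfolding iso_def
    proof (intro exI ballI)
      fix m assume "m \<in> supp3 c3"
      then have "cw (ii m) \<noteq> 0" by (simp add: supp3_def c3_def)
      from Wcw[OF this] have W: "wsum wt1 4 (ii m) = fst w" "wsum wt2 4 (ii m) = snd w" by auto
      have i1: "f1 * int (fst m) + (2*f1+2) * int (fst (snd m)) + (4*f1+4) * int (snd (snd m)) = fst w - ((2*f1+4) * int k1 + 2*f1 * int k2)"
        using W(1) unfolding ii_def wsum4 wt1_def by (simp add: algebra_simps)
      have i2: "f2 * int (fst m) + (2*f2+2) * int (fst (snd m)) + (4*f2+4) * int (snd (snd m)) = snd w - (2*f2 * int k1 + (2*f2+4) * int k2)"
        using W(2) unfolding ii_def wsum4 wt2_def by (simp add: algebra_simps)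
      have "of_int (f1 * int (fst m) + (2*f1+2) * int (fst (snd m)) + (4*f1+4) * int (snd (snd m))) = (of_int (fst w - ((2*f1+4) * int k1 + 2*f1 * int k2)) :: complex)"
        "of_int (f2 * int (fst m) + (2*f2+2) * int (fst (snd m)) + (4*f2+4) * int (snd (snd m))) = (of_int (snd w - (2*f2 * int k1 + (2*f2+4) * int k2)) :: complex)"
        using i1 i2 by simp_all
      then show "of_int f1 * of_nat (fst m) + of_int (2*f1+2) * of_nat (fst (snd m)) + of_int (4*f1+4) * of_nat (snd (snd m)) = (of_int (fst w - ((2*f1+4) * int k1 + 2*f1 * int k2)) :: complex) \<and>
         of_int f2 * of_nat (fst m) + of_int (2*f2+2) * of_nat (fst (snd m)) + of_int (4*f2+4) * of_nat (snd (snd m)) = (of_int (snd w - (2*f2 * int k1 + (2*f2+4) * int k2)) :: complex)"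
        by simp
    qed
    have "c3 = (\<lambda>_. 0)" by (rule main[OF fin3 iso3 van])
    then have "c3 (jf \<alpha>0) = 0" by simp
    moreover have "cw \<alpha>0 \<noteq> 0" using cw0 a0 by simp
    ultimately show False unfolding c3_def using ij by simp
  qed
qed

theorem mainTheorem19:
  fixes d f1 f2 :: int and F :: "complex \<Rightarrow> complex \<Rightarrow> complex"
  assumes "d > 1" and "squarefree d"
    and "OK_principal d"
    and "hilbert_modular_form d f1 f2 F"
    and "symmetric_form F"
    and "\<exists>z1\<in>upper_half. \<exists>z2\<in>upper_half. TF f1 f2 F z1 z2 \<noteq> 0"
  shows "alg_indep [F, LambdaF F, PiOp 1 f1 F, PiOp 2 f2 F]
       \<and> alg_indep [F, LambdaF F, PiF f1 f2 F]"
proof -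
  have shF: "sh F" by (rule hmf_sh[OF assms(4)])
  define V0 where "V0 = (upper_half \<times> upper_half) \<inter> (\<lambda>(a,b). TF f1 f2 F a b) -` (- {0})"
  have oV0: "open V0" unfolding V0_def
    by (intro continuous_open_preimage[OF sh_cont[OF sh_TF[OF shF]]]) (auto simp: open_Times open_H)
  have V0H: "V0 \<subseteq> upper_half \<times> upper_half" unfolding V0_def by auto
  have TFnz: "TF f1 f2 F a b \<noteq> 0" if "(a,b) \<in> V0" for a b using that unfolding V0_def by auto
  have ne: "V0 \<noteq> {}" using assms(6) unfolding V0_def by auto
  have cr: "core F f1 f2 V0"
    by (unfold_locales) (use shF oV0 V0H TFnz in auto)
  have tr: "\<And>x. transl F f1 f2 (emb1 d x) (emb2 d x)" by (rule hmf_trans[OF assms(4)])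
  have om: "omega1 d \<noteq> omega2 d" by (rule omega_ne[OF assms(1)])
  have e: "f1 = f2" by (rule f12[OF tr assms(5) cr ne])
  show ?thesis using claim1[OF tr om cr ne e] claim2[OF tr om cr ne] by blast
qed

end
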